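(* Let $r_c$, $z_c$, $n_c$ be mutually independent real random variables with $z_c\sim\mathcal{N}(0,\mathsf{Z}_c)$, $n_c\sim\mathcal{N}(0,N_0)$ (where $\mathsf{Z}_c\ge0$, $N_0>0$), and $\mathbb{E}[|r_c|^2]\le\mathsf{R}_c$. Let $Q_c:\mathbb{R}\to\mathfrak{Q}_c$ be a scalar quantizer with $M\ge2$ levels and set $q_c=Q_c(r_c+z_c+n_c)$. Define $\mathsf{SINR}_c=\mathsf{R}_c/(\mathsf{Z}_c+N_0)$. Then $$ I(q_c;\,r_c\mid z_c+n_c)\;\le\;\bar{\iota}(M,\mathsf{SINR}_c). $$
   Context: A scalar quantizer with $M$ levels is a map $Q:\mathbb{R}\to\mathfrak{Q}$ with $|\mathfrak{Q}|=M$ that partitions $\mathbb{R}$ into $M$ intervals separated by at most $M-1$ boundary points and maps each interval to a distinct level (it may be non-uniform). Logarithms are base 2. $H_b(x)=-x\log x-(1-x)\log(1-x)$ is the binary entropy function and $\bar H_b(x)=H_b(\min\{x,1/2\})$. $\mathrm{erf}(x)=\frac{2}{\sqrt{\pi}}\int_0^x e^{-t^2}dt$ and $\mathrm{erfc}=1-\mathrm{erf}$. Define $$\bar f(M,\mathsf{SINR})=\mathrm{erf}\Big(\tfrac{(M-1)\sqrt{\mathsf{SINR}}}{\sqrt2}\Big)+\sqrt{\tfrac{2}{\pi}}(M-1)\sqrt{\mathsf{SINR}}\exp\Big(-\tfrac{(M-1)^2\mathsf{SINR}}{2}\Big)-(M-1)^2\,\mathsf{SINR}\,\mathrm{erfc}\Big(\tfrac{(M-1)\sqrt{\mathsf{SINR}}}{\sqrt2}\Big)$$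 and $$\bar\iota(M,\mathsf{SINR})=\min\Big\{\log M,\ \bar H_b\big(\bar f(M,\mathsf{SINR})\big)+\bar f(M,\mathsf{SINR})\log(M-1)\Big\}.$$ *)

theory Defs
  imports "HOL-Probability.Probability"
begin

definition erf :: "real \<Rightarrow> real" where
  "erf x = 2 / sqrt pi * (LBINT t=0..x. exp (- (t\<^sup>2)))"

definition erfc :: "real \<Rightarrow> real" where
  "erfc x = 1 - erf x"

definition Hb :: "real \<Rightarrow> real" where
  "Hb x = - x * log 2 x - (1 - x) * log 2 (1 - x)"

definition Hb_bar :: "real \<Rightarrow> real" where
  "Hb_bar x = Hb (min x (1/2))"

definition f_bar :: "nat \<Rightarrow> real \<Rightarrow> real" where
  "f_bar L s =
     erf ((real L - 1) * sqrt s / sqrt 2)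
     + sqrt (2 / pi) * (real L - 1) * sqrt s * exp (- ((real L - 1)\<^sup>2 * s / 2))
     - (real L - 1)\<^sup>2 * s * erfc ((real L - 1) * sqrt s / sqrt 2)"

definition iota_bar :: "nat \<Rightarrow> real \<Rightarrow> real" where
  "iota_bar L s = min (log 2 (real L))
      (Hb_bar (f_bar L s) + f_bar L s * log 2 (real L - 1))"

definition scalar_quantizer :: "(real \<Rightarrow> 'q) \<Rightarrow> nat \<Rightarrow> bool" where
  "scalar_quantizer Q L \<longleftrightarrow> finite (range Q) \<and> card (range Q) = L \<and>
     (\<forall>y\<in>range Q. is_interval (Q -` {y}))"

definition centered_gaussian :: "'a measure \<Rightarrow> ('a \<Rightarrow> real) \<Rightarrow> real \<Rightarrow> bool" where
  "centered_gaussian M X v \<longleftrightarrow> X \<in> borel_measurable M \<and>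
     distr M borel X = (if v = 0 then return borel 0
                        else density lborel (normal_density 0 (sqrt v)))"

end

theory Submission
  imports Defs
begin

definition Ent :: "'k set \<Rightarrow> ('k \<Rightarrow> real) \<Rightarrow> real" where
  "Ent K h = (\<Sum>k\<in>K. - h k * log 2 (h k))"

lemma gibbs_term:
  fixes h w :: real assumes "0 \<le> h" "0 < w"
  shows "h * log 2 w - h * log 2 h \<le> (w - h) / ln 2"
proof (cases "h = 0")
  case True then show ?thesis using assms by simp
next
  case False
  then have hp: "h > 0" using assms by simp
  have "ln (w / h) \<le> w / h - 1" using hp assms by (intro ln_le_minus_one) simp
  then have "h * ln (w / h) \<le> h * (w / h - 1)" using hp by (intro mult_left_mono) auto
  also have "\<dots> = w - h" using hp by (simp add: field_simps)
  finally have "h * ln w - h * ln h \<le> w - h" using hp assms by (simp add: ln_div algebra_simps)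
  moreover have "h * log 2 w - h * log 2 h = (h * ln w - h * ln h) / ln 2"
    by (simp add: log_def field_simps)
  ultimately show ?thesis
    by (simp add: divide_right_mono)
qed

lemma gibbs:
  assumes K: "finite K" and h0: "\<And>k. k \<in> K \<Longrightarrow> 0 \<le> h k" and h1: "(\<Sum>k\<in>K. h k) = 1"
    and w0: "\<And>k. k \<in> K \<Longrightarrow> 0 < w k" and w1: "(\<Sum>k\<in>K. w k) \<le> 1"
  shows "Ent K h \<le> (\<Sum>k\<in>K. - h k * log 2 (w k))"
proof -
  have "(\<Sum>k\<in>K. - h k * log 2 (w k)) - Ent K h = - (\<Sum>k\<in>K. h k * log 2 (w k) - h k * log 2 (h k))"
    unfolding Ent_def by (simp add: sum_subtractf sum_negf)
  moreover have "(\<Sum>k\<in>K. h k * log 2 (w k) - h k * log 2 (h k)) \<le> (\<Sum>k\<in>K. (w k - h k) / ln 2)"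
    by (intro sum_mono gibbs_term h0 w0)
  moreover have "(\<Sum>k\<in>K. (w k - h k) / ln 2) = ((\<Sum>k\<in>K. w k) - 1) / ln 2"
    using h1 by (simp add: sum_divide_distrib[symmetric] sum_subtractf)
  moreover have "((\<Sum>k\<in>K. w k) - 1) / ln 2 \<le> 0"
    using w1 by (simp add: divide_nonpos_pos)
  ultimately show ?thesis by linarith
qed

lemma Ent_le_log_card:
  assumes K: "finite K" "K \<noteq> {}" and h0: "\<And>k. k \<in> K \<Longrightarrow> 0 \<le> h k" and h1: "(\<Sum>k\<in>K. h k) = 1"
  shows "Ent K h \<le> log 2 (card K)"
proof -
  have c: "real (card K) > 0" using K by auto
  have "Ent K h \<le> (\<Sum>k\<in>K. - h k * log 2 (1 / card K))"
    using K c by (intro gibbs h0 h1) auto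
  also have "\<dots> = (\<Sum>k\<in>K. h k) * log 2 (card K)"
    using c by (simp add: sum_distrib_right log_divide)
  finally show ?thesis using h1 by simp
qed

lemma Ent_fano:
  assumes K: "finite K" and k0: "k0 \<in> K" and L: "card K = L" "L \<ge> 2"
    and h0: "\<And>k. k \<in> K \<Longrightarrow> 0 \<le> h k" and h1: "(\<Sum>k\<in>K. h k) = 1"
    and g: "0 < g" "g < 1"
  shows "Ent K h \<le> - (h k0) * log 2 (1 - g) - (1 - h k0) * log 2 (g / (real L - 1))"
proof -
  let ?w = "\<lambda>k. if k = k0 then 1 - g else g / (real L - 1)"
  have Lr: "real L - 1 > 0" using L by simp
  have cK: "card (K - {k0}) = L - 1" using K k0 L by simp
  have sw: "(\<Sum>k\<in>K. ?w k) = 1 - g + (\<Sum>k\<in>K - {k0}. g / (real L - 1))"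
    using K k0 by (simp add: sum.remove[of K k0])
  also have "\<dots> = 1" using cK Lr L by (simp add: of_nat_diff)
  finally have sw1: "(\<Sum>k\<in>K. ?w k) = 1" .
  have "Ent K h \<le> (\<Sum>k\<in>K. - h k * log 2 (?w k))"
    using Lr g by (intro gibbs K h0 h1 sw1[THEN eq_refl]) auto
  also have "\<dots> = - h k0 * log 2 (1 - g) + (\<Sum>k\<in>K - {k0}. - h k * log 2 (g / (real L - 1)))"
    using K k0 by (simp add: sum.remove[of K k0])
  also have "(\<Sum>k\<in>K - {k0}. - h k * log 2 (g / (real L - 1))) = - (\<Sum>k\<in>K - {k0}. h k) * log 2 (g / (real L - 1))"
    by (simp add: sum_negf sum_distrib_right)
  also have "(\<Sum>k\<in>K - {k0}. h k) = 1 - h k0"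
    using K k0 h1 by (simp add: sum.remove[of K k0])
  finally show ?thesis by (simp add: algebra_simps)
qed

lemma xlogx_bound:
  fixes x b :: real assumes b: "1 < b" and x: "0 \<le> x" "x \<le> B"
  shows "\<bar>x * log b x\<bar> \<le> (1 + B\<^sup>2) / ln b"
proof (cases "x = 0")
  case True then show ?thesis using b by (simp add: add_pos_nonneg)
next
  case False
  then have xp: "x > 0" using x by simp
  have lb: "ln b > 0" using b by simp
  have "ln x \<le> x - 1" using xp by (intro ln_le_minus_one) simp
  then have u: "x * ln x \<le> x * (x - 1)" using xp by (intro mult_left_mono) auto
  have "ln (1/x) \<le> 1/x - 1" using xp by (intro ln_le_minus_one) simp
  then have "- ln x \<le> 1/x - 1" using xp by (simp add: ln_div)
  then have "x * (- ln x) \<le> x * (1/x - 1)" using xp by (intro mult_left_mono) auto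
  also have "x * (1/x - 1) = 1 - x" using xp by (simp add: field_simps)
  finally have l: "- (x * ln x) \<le> 1 - x" by simp
  have "x\<^sup>2 \<le> B\<^sup>2" using x by (intro power_mono) auto
  moreover have "x * (x - 1) = x\<^sup>2 - x" by (simp add: power2_eq_square algebra_simps)
  moreover have "0 \<le> B\<^sup>2" by simp
  ultimately have "\<bar>x * ln x\<bar> \<le> 1 + B\<^sup>2" using u l xp by (intro abs_leI) linarith+
  moreover have "\<bar>x * log b x\<bar> = \<bar>x * ln x\<bar> / ln b" using lb by (simp add: log_def abs_mult abs_divide)
  ultimately show ?thesis using lb by (simp add: divide_right_mono)
qed

context prob_space begin

lemma nn_integral_pair_discrete:
  fixes q :: "'a \<Rightarrow> 'q" and N :: "'y measure"
  assumes K: "finite K" and qK: "\<And>\<omega>. q \<omega> \<in> K"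
    and q[measurable]: "q \<in> measurable M (count_space UNIV)"
    and N: "sigma_finite_measure N"
    and F[measurable]: "F \<in> borel_measurable (count_space UNIV \<Otimes>\<^sub>M N)"
  shows "(\<integral>\<^sup>+z. F z \<partial>(distr M (count_space UNIV) q \<Otimes>\<^sub>M N)) =
    (\<Sum>k\<in>K. emeasure M {\<omega>\<in>space M. q \<omega> = k} * (\<integral>\<^sup>+y. F (k, y) \<partial>N))"
proof -
  interpret N: sigma_finite_measure N by fact
  have sp: "sets (distr M (count_space UNIV) q \<Otimes>\<^sub>M N) = sets (count_space UNIV \<Otimes>\<^sub>M N)"
    by (intro sets_pair_measure_cong) auto
  have F': "F \<in> borel_measurable (distr M (count_space UNIV) q \<Otimes>\<^sub>M N)"
    using F by (subst measurable_cong_sets[OF sp refl])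
  have "(\<integral>\<^sup>+z. F z \<partial>(distr M (count_space UNIV) q \<Otimes>\<^sub>M N)) =
     (\<integral>\<^sup>+k. (\<integral>\<^sup>+y. F (k, y) \<partial>N) \<partial>distr M (count_space UNIV) q)"
    by (rule N.nn_integral_fst[symmetric]) (rule F')
  also have "\<dots> = (\<integral>\<^sup>+\<omega>. (\<integral>\<^sup>+y. F (q \<omega>, y) \<partial>N) \<partial>M)"
    by (subst nn_integral_distr) auto
  also have "\<dots> = (\<integral>\<^sup>+\<omega>. (\<Sum>k\<in>K. (\<integral>\<^sup>+y. F (k, y) \<partial>N) * indicator {\<omega>\<in>space M. q \<omega> = k} \<omega>) \<partial>M)"
  proof (intro nn_integral_cong)
    fix \<omega> assume "\<omega> \<in> space M"
    then have "(\<Sum>k\<in>K. (\<integral>\<^sup>+y. F (k, y) \<partial>N) * indicator {\<omega>\<in>space M. q \<omega> = k} \<omega>) =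
       (\<Sum>k\<in>K. if k = q \<omega> then (\<integral>\<^sup>+y. F (k, y) \<partial>N) else 0)"
      by (intro sum.cong) (auto split: split_indicator)
    also have "\<dots> = (\<integral>\<^sup>+y. F (q \<omega>, y) \<partial>N)" using K qK[of \<omega>] by (simp add: sum.delta')
    finally show "(\<integral>\<^sup>+y. F (q \<omega>, y) \<partial>N) = (\<Sum>k\<in>K. (\<integral>\<^sup>+y. F (k, y) \<partial>N) * indicator {\<omega>\<in>space M. q \<omega> = k} \<omega>)" by simp
  qed
  also have "\<dots> = (\<Sum>k\<in>K. (\<integral>\<^sup>+\<omega>. (\<integral>\<^sup>+y. F (k, y) \<partial>N) * indicator {\<omega>\<in>space M. q \<omega> = k} \<omega> \<partial>M))"
    by (rule nn_integral_sum) auto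
  also have "\<dots> = (\<Sum>k\<in>K. emeasure M {\<omega>\<in>space M. q \<omega> = k} * (\<integral>\<^sup>+y. F (k, y) \<partial>N))"
    by (intro sum.cong refl, subst nn_integral_cmult_indicator) (auto simp: mult.commute)
  finally show ?thesis .
qed

lemma integral_pair_discrete:
  fixes q :: "'a \<Rightarrow> 'q" and N :: "'y measure" and F :: "'q \<times> 'y \<Rightarrow> real"
  assumes K: "finite K" and qK: "\<And>\<omega>. q \<omega> \<in> K"
    and q[measurable]: "q \<in> measurable M (count_space UNIV)"
    and N: "prob_space N"
    and F: "integrable (distr M (count_space UNIV) q \<Otimes>\<^sub>M N) F"
  shows "(\<integral>z. F z \<partial>(distr M (count_space UNIV) q \<Otimes>\<^sub>M N)) =
    (\<Sum>k\<in>K. prob {\<omega>\<in>space M. q \<omega> = k} * (\<integral>y. F (k, y) \<partial>N))"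
proof -
  interpret N: prob_space N by fact
  interpret Pq: prob_space "distr M (count_space UNIV) q" by (rule prob_space_distr) simp
  interpret P: pair_sigma_finite "distr M (count_space UNIV) q" N ..
  have "(\<integral>z. F z \<partial>(distr M (count_space UNIV) q \<Otimes>\<^sub>M N)) =
     (\<integral>k. (\<integral>y. F (k, y) \<partial>N) \<partial>distr M (count_space UNIV) q)"
    by (rule P.integral_fst'[symmetric]) fact
  also have "\<dots> = (\<integral>\<omega>. (\<integral>y. F (q \<omega>, y) \<partial>N) \<partial>M)"
    by (subst integral_distr) auto
  also have "\<dots> = (\<integral>\<omega>. (\<Sum>k\<in>K. (\<integral>y. F (k, y) \<partial>N) * indicator {\<omega>\<in>space M. q \<omega> = k} \<omega>) \<partial>M)"
  proof (intro Bochner_Integration.integral_cong refl)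
    fix \<omega> assume "\<omega> \<in> space M"
    then have "(\<Sum>k\<in>K. (\<integral>y. F (k, y) \<partial>N) * indicator {\<omega>\<in>space M. q \<omega> = k} \<omega>) =
       (\<Sum>k\<in>K. if k = q \<omega> then (\<integral>y. F (k, y) \<partial>N) else 0)"
      by (intro sum.cong) (auto split: split_indicator)
    also have "\<dots> = (\<integral>y. F (q \<omega>, y) \<partial>N)" using K qK[of \<omega>] by (simp add: sum.delta')
    finally show "(\<integral>y. F (q \<omega>, y) \<partial>N) = (\<Sum>k\<in>K. (\<integral>y. F (k, y) \<partial>N) * indicator {\<omega>\<in>space M. q \<omega> = k} \<omega>)" by simp
  qed
  also have "\<dots> = (\<Sum>k\<in>K. (\<integral>\<omega>. (\<integral>y. F (k, y) \<partial>N) * indicator {\<omega>\<in>space M. q \<omega> = k} \<omega> \<partial>M))"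
    by (rule Bochner_Integration.integral_sum) (auto intro!: integrable_mult_left integrable_real_indicator simp: less_top[symmetric])
  also have "\<dots> = (\<Sum>k\<in>K. prob {\<omega>\<in>space M. q \<omega> = k} * (\<integral>y. F (k, y) \<partial>N))"
    by (intro sum.cong refl) (simp add: mult.commute)
  finally show ?thesis .
qed

end

context prob_space begin

lemma MI_discrete:
  fixes q :: "'a \<Rightarrow> 'q" and Y :: "'a \<Rightarrow> 'y" and T :: "'y measure" and H :: "'q \<Rightarrow> 'y \<Rightarrow> real"
  assumes b: "1 < b"
    and K: "finite K" and qK: "\<And>\<omega>. q \<omega> \<in> K"
    and q[measurable]: "q \<in> measurable M (count_space UNIV)"
    and Y[measurable]: "Y \<in> measurable M T"
    and H[measurable]: "\<And>k. k \<in> K \<Longrightarrow> H k \<in> borel_measurable T"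
    and H0: "\<And>k y. k \<in> K \<Longrightarrow> y \<in> space T \<Longrightarrow> 0 \<le> H k y"
    and H1: "\<And>k y. k \<in> K \<Longrightarrow> y \<in> space T \<Longrightarrow> H k y \<le> 1"
    and joint: "\<And>C. C \<in> sets (count_space UNIV \<Otimes>\<^sub>M T) \<Longrightarrow>
       emeasure M ((\<lambda>\<omega>. (q \<omega>, Y \<omega>)) -` C \<inter> space M) =
         (\<Sum>k\<in>K. \<integral>\<^sup>+y. H k y * indicator C (k, y) \<partial>distr M T Y)"
  shows "mutual_information b (count_space UNIV) T q Y =
     (\<Sum>k\<in>K. \<integral>y. H k y * log b (H k y) \<partial>distr M T Y) -
     (\<Sum>k\<in>K. prob {\<omega>\<in>space M. q \<omega> = k} * log b (prob {\<omega>\<in>space M. q \<omega> = k}))"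
proof -
  define N where "N = distr M T Y"
  define Pq where "Pq = distr M (count_space UNIV) q"
  define D where "D = Pq \<Otimes>\<^sub>M N"
  define p where "p k = prob {\<omega>\<in>space M. q \<omega> = k}" for k
  interpret N: prob_space N unfolding N_def by (rule prob_space_distr) simp
  interpret Pq: prob_space Pq unfolding Pq_def by (rule prob_space_distr) simp
  interpret D: pair_prob_space Pq N ..
  interpret DD: prob_space D unfolding D_def by (rule D.prob_space_axioms)
  have sN: "sets N = sets T" "space N = space T" unfolding N_def by auto
  have sD: "sets D = sets (count_space UNIV \<Otimes>\<^sub>M T)"
    unfolding D_def Pq_def by (intro sets_pair_measure_cong) (auto simp: sN)
  have spD: "space D = UNIV \<times> space T"
    unfolding D_def Pq_def by (simp add: space_pair_measure sN)
  have Hm: "H k \<in> borel_measurable N" if "k \<in> K" for k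
    using H[OF that] by (simp add: measurable_cong_sets[OF sN(1) refl])
  have Hint: "integrable N (H k)" if k: "k \<in> K" for k
    by (rule N.integrable_const_bound[where B=1]) (auto simp: sN H0 H1 k Hm intro!: AE_I2)
  have p0: "0 \<le> p k" for k unfolding p_def by simp
  have pH: "p k = (\<integral>y. H k y \<partial>N)" if k: "k \<in> K" for k
  proof -
    have C: "{k} \<times> space T \<in> sets (count_space UNIV \<Otimes>\<^sub>M T)" by (intro pair_measureI) auto
    have "(\<lambda>\<omega>. (q \<omega>, Y \<omega>)) -` ({k} \<times> space T) \<inter> space M = {\<omega>\<in>space M. q \<omega> = k}"
      using measurable_space[OF Y] by auto
    then have "emeasure M {\<omega>\<in>space M. q \<omega> = k} = (\<Sum>j\<in>K. \<integral>\<^sup>+y. H j y * indicator ({k} \<times> space T) (j, y) \<partial>N)"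
      using joint[OF C] by (simp add: N_def)
    also have "\<dots> = (\<Sum>j\<in>K. if j = k then (\<integral>\<^sup>+y. H k y \<partial>N) else 0)"
      by (intro sum.cong refl) (auto intro!: nn_integral_cong simp: indicator_def sN)
    also have "\<dots> = (\<integral>\<^sup>+y. H k y \<partial>N)" using K k by (simp add: sum.delta')
    also have "\<dots> = ennreal (\<integral>y. H k y \<partial>N)"
      by (intro nn_integral_eq_integral Hint k) (auto simp: sN H0 k intro!: AE_I2)
    finally have "ennreal (p k) = ennreal (\<integral>y. H k y \<partial>N)"
      unfolding p_def by (simp add: emeasure_eq_measure)
    moreover have "0 \<le> (\<integral>y. H k y \<partial>N)" by (intro Bochner_Integration.integral_nonneg) (auto simp: sN H0 k)
    ultimately show ?thesis using p0[of k] by simp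
  qed
  define g where "g z = (\<Sum>j\<in>K. indicator {j} (fst z) * (H j (snd z) / p j))" for z
  have gk: "g (k, y) = H k y / p k" if "k \<in> K" for k y
  proof -
    have "g (k, y) = (\<Sum>j\<in>K. if j = k then H k y / p k else 0)"
      unfolding g_def by (intro sum.cong) (auto simp: indicator_def)
    also have "\<dots> = H k y / p k" using K that by simp
    finally show ?thesis .
  qed
  have gnK: "g (k, y) = 0" if "k \<notin> K" for k y
    using that unfolding g_def by (auto simp: indicator_def intro!: sum.neutral)
  have gm: "g \<in> borel_measurable (count_space UNIV \<Otimes>\<^sub>M T)"
    unfolding g_def
  proof (intro borel_measurable_sum borel_measurable_times borel_measurable_divide measurable_const)
    fix j assume j: "j \<in> K"
    show "(\<lambda>z. indicator {j} (fst z) :: real) \<in> borel_measurable (count_space UNIV \<Otimes>\<^sub>M T)"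
      by (rule measurable_compose[OF measurable_fst]) simp
    show "(\<lambda>z. H j (snd z)) \<in> borel_measurable (count_space UNIV \<Otimes>\<^sub>M T)"
      by (rule measurable_compose[OF measurable_snd H[OF j]])
  qed simp
  have gmD: "g \<in> borel_measurable D" using gm by (simp add: measurable_cong_sets[OF sD refl])
  have g0: "0 \<le> g z" if "z \<in> space D" for z
    using that H0 p0 unfolding g_def by (auto simp: spD intro!: sum_nonneg divide_nonneg_nonneg)
  define Bg where "Bg = (\<Sum>j\<in>K. 1 / p j)"
  have gB: "g z \<le> Bg" if "z \<in> space D" for z
  proof (cases "fst z \<in> K")
    case True
    obtain k y where z: "z = (k, y)" by (cases z)
    with True that have k: "k \<in> K" and y: "y \<in> space T" by (auto simp: spD)
    have "g z = H k y / p k" using gk[OF k] z by simp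
    also have "\<dots> \<le> 1 / p k" using H1[OF k y] p0[of k] by (intro divide_right_mono) auto
    also have "\<dots> \<le> Bg" unfolding Bg_def using K k p0 by (intro member_le_sum) auto
    finally show ?thesis .
  next
    case False
    then have "g z = 0" using gnK[of "fst z" "snd z"] by simp
    moreover have "0 \<le> Bg" unfolding Bg_def using p0 by (intro sum_nonneg) auto
    ultimately show ?thesis by simp
  qed
  have dens: "distr M (count_space UNIV \<Otimes>\<^sub>M T) (\<lambda>\<omega>. (q \<omega>, Y \<omega>)) = density D g"
  proof (rule measure_eqI)
    show "sets (distr M (count_space UNIV \<Otimes>\<^sub>M T) (\<lambda>\<omega>. (q \<omega>, Y \<omega>))) = sets (density D g)"
      using sD by simp
    fix C assume "C \<in> sets (distr M (count_space UNIV \<Otimes>\<^sub>M T) (\<lambda>\<omega>. (q \<omega>, Y \<omega>)))"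
    then have C[measurable]: "C \<in> sets (count_space UNIV \<Otimes>\<^sub>M T)" by simp
    have CD: "C \<in> sets D" using C sD by simp
    have "emeasure (density D g) C = (\<integral>\<^sup>+z. g z * indicator C z \<partial>D)"
      using gmD CD by (simp add: emeasure_density nn_integral_set_ennreal)
    also have "\<dots> = (\<Sum>k\<in>K. emeasure M {\<omega>\<in>space M. q \<omega> = k} * (\<integral>\<^sup>+y. g (k, y) * indicator C (k, y) \<partial>N))"
      unfolding D_def Pq_def
    proof (rule nn_integral_pair_discrete[OF K qK q])
      show "sigma_finite_measure N" by unfold_locales
      have "(\<lambda>z. ennreal (g z * indicator C z)) \<in> borel_measurable (count_space UNIV \<Otimes>\<^sub>M T)"
        using gm by measurable
      then show "(\<lambda>z. ennreal (g z * indicator C z)) \<in> borel_measurable (count_space UNIV \<Otimes>\<^sub>M N)"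
        by (simp add: measurable_cong_sets[OF sets_pair_measure_cong[OF refl sN(1)] refl])
    qed
    also have "\<dots> = (\<Sum>k\<in>K. \<integral>\<^sup>+y. H k y * indicator C (k, y) \<partial>N)"
    proof (intro sum.cong refl)
      fix k assume k: "k \<in> K"
      have gCm: "(\<lambda>y. ennreal (g (k, y) * indicator C (k, y))) \<in> borel_measurable N"
        unfolding measurable_cong_sets[OF sN(1) refl] using gm C by measurable
      show "emeasure M {\<omega>\<in>space M. q \<omega> = k} * (\<integral>\<^sup>+y. g (k, y) * indicator C (k, y) \<partial>N) =
          (\<integral>\<^sup>+y. H k y * indicator C (k, y) \<partial>N)"
      proof (cases "p k = 0")
        case True
        then have e0: "emeasure M {\<omega>\<in>space M. q \<omega> = k} = 0"
          unfolding p_def by (simp add: emeasure_eq_measure)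
        have "(\<integral>\<^sup>+y. H k y * indicator C (k, y) \<partial>N) \<le> (\<integral>\<^sup>+y. H k y \<partial>N)"
          by (intro nn_integral_mono) (auto split: split_indicator)
        also have "\<dots> = ennreal (\<integral>y. H k y \<partial>N)"
          by (intro nn_integral_eq_integral Hint k) (auto simp: sN H0 k intro!: AE_I2)
        also have "\<dots> = 0" using True pH[OF k] by simp
        finally show ?thesis using e0 by simp
      next
        case False
        then have pk: "p k > 0" using p0[of k] by simp
        have "emeasure M {\<omega>\<in>space M. q \<omega> = k} * (\<integral>\<^sup>+y. g (k, y) * indicator C (k, y) \<partial>N) =
            (\<integral>\<^sup>+y. ennreal (p k) * ennreal (g (k, y) * indicator C (k, y)) \<partial>N)"
          unfolding p_def emeasure_eq_measure
          by (rule nn_integral_cmult[symmetric]) (rule gCm)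
        also have "\<dots> = (\<integral>\<^sup>+y. H k y * indicator C (k, y) \<partial>N)"
        proof (intro nn_integral_cong)
          fix y assume y: "y \<in> space N"
          have e1: "p k * (g (k, y) * indicator C (k, y)) = H k y * indicator C (k, y)"
            using pk by (simp add: gk[OF k])
          have gnn: "0 \<le> g (k, y) * indicator C (k, y)"
            using pk H0[OF k, of y] y by (simp add: gk[OF k] sN)
          have "ennreal (p k) * ennreal (g (k, y) * indicator C (k, y)) = ennreal (p k * (g (k, y) * indicator C (k, y)))"
            by (rule ennreal_mult[symmetric]) (use pk gnn in auto)
          also have "\<dots> = ennreal (H k y * indicator C (k, y))" by (simp only: e1)
          finally show "ennreal (p k) * ennreal (g (k, y) * indicator C (k, y)) = ennreal (H k y * indicator C (k, y))" .
        qed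
        finally show ?thesis .
      qed
    qed
    also have "\<dots> = emeasure M ((\<lambda>\<omega>. (q \<omega>, Y \<omega>)) -` C \<inter> space M)"
      using joint[OF C] by (simp add: N_def)
    also have "\<dots> = emeasure (distr M (count_space UNIV \<Otimes>\<^sub>M T) (\<lambda>\<omega>. (q \<omega>, Y \<omega>))) C"
      by (rule emeasure_distr[symmetric]) auto
    finally show "emeasure (distr M (count_space UNIV \<Otimes>\<^sub>M T) (\<lambda>\<omega>. (q \<omega>, Y \<omega>))) C = emeasure (density D g) C"
      by simp
  qed
  have "mutual_information b (count_space UNIV) T q Y = KL_divergence b D (density D g)"
    unfolding mutual_information_def dens D_def Pq_def N_def ..
  also have "\<dots> = (\<integral>z. g z * log b (g z) \<partial>D)"
    by (rule DD.KL_density[OF b gmD]) (auto intro!: AE_I2 g0)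
  also have "\<dots> = (\<Sum>k\<in>K. p k * (\<integral>y. g (k, y) * log b (g (k, y)) \<partial>N))"
    unfolding D_def Pq_def p_def
  proof (rule integral_pair_discrete[OF K qK q])
    show "prob_space N" by unfold_locales
    have "integrable D (\<lambda>z. g z * log b (g z))"
    proof (rule DD.integrable_const_bound[where B="(1 + Bg\<^sup>2) / ln b"])
      show "AE z in D. norm (g z * log b (g z)) \<le> (1 + Bg\<^sup>2) / ln b"
        by (intro AE_I2) (auto intro!: xlogx_bound[OF b] g0 gB)
      show "(\<lambda>z. g z * log b (g z)) \<in> borel_measurable D" using gmD by measurable
    qed
    then show "integrable (distr M (count_space UNIV) q \<Otimes>\<^sub>M N) (\<lambda>z. g z * log b (g z))"
      by (simp add: D_def Pq_def)
  qed
  also have "\<dots> = (\<Sum>k\<in>K. (\<integral>y. H k y * log b (H k y) \<partial>N) - p k * log b (p k))"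
  proof (intro sum.cong refl)
    fix k assume k: "k \<in> K"
    have HlogH: "integrable N (\<lambda>y. H k y * log b (H k y))"
    proof (rule N.integrable_const_bound[where B="(1 + 1\<^sup>2) / ln b"])
      show "AE y in N. norm (H k y * log b (H k y)) \<le> (1 + 1\<^sup>2) / ln b"
      proof (intro AE_I2)
        fix y assume "y \<in> space N"
        then show "norm (H k y * log b (H k y)) \<le> (1 + 1\<^sup>2) / ln b"
          using xlogx_bound[OF b H0[OF k] H1[OF k], of y] by (simp add: sN)
      qed
      show "(\<lambda>y. H k y * log b (H k y)) \<in> borel_measurable N" using Hm[OF k] by measurable
    qed
    show "p k * (\<integral>y. g (k, y) * log b (g (k, y)) \<partial>N) = (\<integral>y. H k y * log b (H k y) \<partial>N) - p k * log b (p k)"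
    proof (cases "p k = 0")
      case True
      have "AE y in N. H k y = 0"
        using True pH[OF k] by (subst integral_nonneg_eq_0_iff_AE[symmetric]) (auto intro!: Hint k AE_I2 H0 simp: sN)
      then have "(\<integral>y. H k y * log b (H k y) \<partial>N) = (\<integral>y. 0 \<partial>N)"
        using Hm[OF k] by (intro integral_cong_AE) auto
      then show ?thesis using True by simp
    next
      case False
      then have pk: "p k > 0" using p0[of k] by simp
      have "p k * (\<integral>y. g (k, y) * log b (g (k, y)) \<partial>N) = (\<integral>y. p k * (g (k, y) * log b (g (k, y))) \<partial>N)"
        by simp
      also have "\<dots> = (\<integral>y. H k y * log b (H k y) - H k y * log b (p k) \<partial>N)"
      proof (intro Bochner_Integration.integral_cong refl)
        fix y assume y: "y \<in> space N"
        show "p k * (g (k, y) * log b (g (k, y))) = H k y * log b (H k y) - H k y * log b (p k)"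
        proof (cases "H k y = 0")
          case True then show ?thesis by (simp add: gk[OF k])
        next
          case False
          then have "H k y > 0" using H0[OF k, of y] y by (simp add: sN)
          then show ?thesis using pk b by (simp add: gk[OF k] log_divide algebra_simps)
        qed
      qed
      also have "\<dots> = (\<integral>y. H k y * log b (H k y) \<partial>N) - (\<integral>y. H k y * log b (p k) \<partial>N)"
        by (rule Bochner_Integration.integral_diff[OF HlogH]) (intro integrable_mult_left Hint k)
      also have "(\<integral>y. H k y * log b (p k) \<partial>N) = p k * log b (p k)"
        using pH[OF k] by simp
      finally show ?thesis .
    qed
  qed
  also have "\<dots> = (\<Sum>k\<in>K. \<integral>y. H k y * log b (H k y) \<partial>N) - (\<Sum>k\<in>K. p k * log b (p k))"
    by (simp add: sum_subtractf)
  finally show ?thesis unfolding N_def p_def .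
qed

end

lemma gauss_Icc_nn:
  fixes x :: real assumes x: "0 \<le> x"
  shows "(\<integral>\<^sup>+t. ennreal (exp (- t\<^sup>2)) * indicator {0..x} t \<partial>lborel) = ennreal (LBINT t=0..x. exp (- t\<^sup>2))"
proof -
  have si: "set_integrable lborel {0..x} (\<lambda>t. exp (- t\<^sup>2))"
    by (intro borel_integrable_atLeastAtMost') (intro continuous_intros)
  have "(LBINT t=0..x. exp (- t\<^sup>2)) = (LBINT t:{0..x}. exp (- t\<^sup>2))"
    using interval_integral_Icc[of 0 x] x by (simp add: zero_ereal_def)
  also have "\<dots> = (\<integral>t. indicator {0..x} t * exp (- t\<^sup>2) \<partial>lborel)"
    by (simp add: set_lebesgue_integral_def)
  finally have e: "(LBINT t=0..x. exp (- t\<^sup>2)) = (\<integral>t. indicator {0..x} t * exp (- t\<^sup>2) \<partial>lborel)" .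
  have "(\<integral>\<^sup>+t. ennreal (exp (- t\<^sup>2)) * indicator {0..x} t \<partial>lborel) =
      (\<integral>\<^sup>+t. ennreal (indicator {0..x} t * exp (- t\<^sup>2)) \<partial>lborel)"
    by (intro nn_integral_cong) (simp split: split_indicator)
  also have "\<dots> = ennreal (\<integral>t. indicator {0..x} t * exp (- t\<^sup>2) \<partial>lborel)"
    using si by (intro nn_integral_eq_integral) (auto simp: set_integrable_def)
  finally show ?thesis using e by simp
qed

lemma erf_nn:
  fixes x :: real assumes x: "0 \<le> x"
  shows "ennreal (erf x * sqrt pi / 2) = (\<integral>\<^sup>+t. ennreal (exp (- t\<^sup>2)) * indicator {0..x} t \<partial>lborel)"
  unfolding gauss_Icc_nn[OF x] erf_def by simp

lemma erf_nonneg: "0 \<le> x \<Longrightarrow> 0 \<le> erf x"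
proof -
  assume x: "0 \<le> x"
  have "0 \<le> (LBINT t=0..x. exp (- t\<^sup>2))"
    using interval_integral_Icc[of 0 x "\<lambda>t. exp (- t\<^sup>2)"] x
    by (simp add: zero_ereal_def set_lebesgue_integral_def Bochner_Integration.integral_nonneg)
  then show ?thesis unfolding erf_def by simp
qed

lemma erf_mono:
  fixes x y :: real assumes x: "0 \<le> x" and xy: "x \<le> y"
  shows "erf x \<le> erf y"
proof -
  have "ennreal (erf x * sqrt pi / 2) \<le> ennreal (erf y * sqrt pi / 2)"
    unfolding erf_nn[OF x] erf_nn[of y] using x xy
    by (subst erf_nn) (auto intro!: nn_integral_mono split: split_indicator)
  then have "erf x * sqrt pi / 2 \<le> erf y * sqrt pi / 2"
    using erf_nonneg[of y] x xy by (subst (asm) ennreal_le_iff) auto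
  then show ?thesis by simp
qed

lemma erf_0: "erf 0 = 0"
  unfolding erf_def using interval_integral_endpoints_same[of 0] by (simp add: zero_ereal_def)

lemma gauss_half_total:
  "(\<integral>\<^sup>+t. ennreal (exp (- t\<^sup>2)) * indicator {0..} t \<partial>lborel) = ennreal (sqrt pi / 2)"
proof -
  have "(\<integral>\<^sup>+t. ennreal (exp (- t\<^sup>2)) * indicator {0..} t \<partial>lborel) =
      (\<integral>\<^sup>+t. ennreal (indicator {0..} t *\<^sub>R exp (- t\<^sup>2)) \<partial>lborel)"
    by (intro nn_integral_cong) (simp split: split_indicator)
  also have "\<dots> = ennreal (\<integral>t. indicator {0..} t *\<^sub>R exp (- t\<^sup>2) \<partial>lborel)"
    using gaussian_moment_0 by (intro nn_integral_eq_integral) (auto simp: has_bochner_integral_iff)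
  also have "\<dots> = ennreal (sqrt pi / 2)"
    using gaussian_moment_0 by (simp add: has_bochner_integral_iff)
  finally show ?thesis .
qed

lemma gauss_tail:
  fixes u :: real assumes u: "0 < u"
  shows "(\<integral>\<^sup>+t. ennreal (exp (- t\<^sup>2)) * indicator {u..} t \<partial>lborel) \<le> ennreal (exp (- u\<^sup>2) / (2 * u))"
proof -
  have "(\<integral>\<^sup>+t. ennreal (exp (- t\<^sup>2)) * indicator {u..} t \<partial>lborel) \<le>
      (\<integral>\<^sup>+t. ennreal (t * exp (- t\<^sup>2) / u) * indicator {u..} t \<partial>lborel)"
  proof (intro nn_integral_mono)
    fix t show "ennreal (exp (- t\<^sup>2)) * indicator {u..} t \<le> ennreal (t * exp (- t\<^sup>2) / u) * indicator {u..} t"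
    proof (cases "u \<le> t")
      case True
      then have "exp (- t\<^sup>2) \<le> t * exp (- t\<^sup>2) / u" using u by (simp add: field_simps)
      then show ?thesis using True by (simp add: ennreal_leI)
    qed simp
  qed
  also have "\<dots> = ennreal (0 - (- exp (- u\<^sup>2) / (2 * u)))"
  proof (rule nn_integral_FTC_atLeast[where F="\<lambda>t. - exp (- t\<^sup>2) / (2 * u)" and T=0])
    show "(\<lambda>t. t * exp (- t\<^sup>2) / u) \<in> borel_measurable borel" by measurable
    show "((\<lambda>t. - exp (- t\<^sup>2) / (2 * u)) has_real_derivative t * exp (- t\<^sup>2) / u) (at t)" if "u \<le> t" for t
      using u by (auto intro!: derivative_eq_intros simp: field_simps)
    show "0 \<le> t * exp (- t\<^sup>2) / u" if "u \<le> t" for t using u that by simp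
    have "((\<lambda>x::real. - exp (- x\<^sup>2) / (2 * u)) \<longlongrightarrow> - 0 / (2 * u)) at_top"
      by (intro tendsto_divide tendsto_minus filterlim_compose[OF exp_at_bot]
                   filterlim_compose[OF filterlim_uminus_at_bot_at_top]
                   filterlim_pow_at_top filterlim_ident tendsto_const) (use u in auto)
    then show "((\<lambda>t. - exp (- t\<^sup>2) / (2 * u)) \<longlongrightarrow> 0) at_top" by simp
  qed
  finally show ?thesis by simp
qed

lemma mills:
  fixes u :: real assumes u: "0 < u"
  shows "u * sqrt pi * (1 - erf u) \<le> exp (- u\<^sup>2)"
proof -
  have "ennreal (sqrt pi / 2) = (\<integral>\<^sup>+t. ennreal (exp (- t\<^sup>2)) * indicator {0..} t \<partial>lborel)"
    by (rule gauss_half_total[symmetric])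
  also have "\<dots> \<le> (\<integral>\<^sup>+t. ennreal (exp (- t\<^sup>2)) * indicator {0..u} t + ennreal (exp (- t\<^sup>2)) * indicator {u..} t \<partial>lborel)"
    by (intro nn_integral_mono) (auto split: split_indicator simp: add_increasing2)
  also have "\<dots> = (\<integral>\<^sup>+t. ennreal (exp (- t\<^sup>2)) * indicator {0..u} t \<partial>lborel) + (\<integral>\<^sup>+t. ennreal (exp (- t\<^sup>2)) * indicator {u..} t \<partial>lborel)"
    by (rule nn_integral_add) auto
  also have "\<dots> \<le> ennreal (erf u * sqrt pi / 2) + ennreal (exp (- u\<^sup>2) / (2 * u))"
    using u by (intro add_mono gauss_tail) (auto simp: erf_nn)
  also have "\<dots> = ennreal (erf u * sqrt pi / 2 + exp (- u\<^sup>2) / (2 * u))"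
    using u erf_nonneg[of u] by (intro ennreal_plus[symmetric]) auto
  finally have "sqrt pi / 2 \<le> erf u * sqrt pi / 2 + exp (- u\<^sup>2) / (2 * u)"
    using u erf_nonneg[of u] by (subst (asm) ennreal_le_iff) (auto intro!: add_nonneg_nonneg)
  then have "sqrt pi * (1 - erf u) \<le> exp (- u\<^sup>2) / u"
    using u by (simp add: field_simps)
  then show ?thesis using u by (simp add: field_simps)
qed

lemma normal_density_even: "normal_density 0 \<sigma> (- x) = normal_density 0 \<sigma> x"
  by (simp add: normal_density_def)

lemma normal_density_mono:
  assumes "\<bar>x\<bar> \<le> \<bar>y\<bar>" shows "normal_density 0 \<sigma> y \<le> normal_density 0 \<sigma> x"
proof -
  have "x\<^sup>2 \<le> y\<^sup>2" using assms by (simp add: abs_le_square_iff)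
  then have "- y\<^sup>2 / (2 * \<sigma>\<^sup>2) \<le> - x\<^sup>2 / (2 * \<sigma>\<^sup>2)"
    by (intro divide_right_mono) auto
  then show ?thesis unfolding normal_density_def
    by (intro mult_left_mono) auto
qed

lemma gauss_interval:
  fixes \<sigma> a :: real assumes s: "0 < \<sigma>" and a: "0 \<le> a"
  shows "emeasure (density lborel (normal_density 0 \<sigma>)) {-a..a} \<le> ennreal (erf (a / (\<sigma> * sqrt 2)))"
proof -
  let ?\<phi> = "normal_density 0 \<sigma>"
  define c where "c = \<sigma> * sqrt 2"
  define w where "w = a / c"
  have c: "c > 0" unfolding c_def using s by simp
  have w: "w \<ge> 0" unfolding w_def using a c by simp
  have A2: "(\<integral>\<^sup>+x. ennreal (?\<phi> x) * indicator {0..a} x \<partial>lborel) = ennreal (erf w / 2)"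
  proof -
    have "(\<integral>\<^sup>+x. ennreal (?\<phi> x) * indicator {0..a} x \<partial>lborel) =
        ennreal \<bar>c\<bar> * (\<integral>\<^sup>+t. ennreal (?\<phi> (0 + c * t)) * indicator {0..a} (0 + c * t) \<partial>lborel)"
      using c by (intro nn_integral_real_affine) auto
    also have "\<dots> = (\<integral>\<^sup>+t. ennreal c * (ennreal (?\<phi> (c * t)) * indicator {0..a} (c * t)) \<partial>lborel)"
      using c by (subst nn_integral_cmult) auto
    also have "\<dots> = (\<integral>\<^sup>+t. ennreal (1 / sqrt pi) * (ennreal (exp (- t\<^sup>2)) * indicator {0..w} t) \<partial>lborel)"
    proof (intro nn_integral_cong)
      fix t :: real
      have "c * ?\<phi> (c * t) = 1 / sqrt pi * exp (- t\<^sup>2)"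
        using s unfolding c_def normal_density_def
        by (simp add: real_sqrt_mult power_mult_distrib field_simps)
      moreover have "indicator {0..a} (c * t) = (indicator {0..w} t :: ennreal)"
      proof -
        have "c * t \<in> {0..a} \<longleftrightarrow> t \<in> {0..w}"
          using c unfolding w_def by (auto simp: field_simps zero_le_mult_iff)
        then show ?thesis by (simp add: indicator_def)
      qed
      ultimately show "ennreal c * (ennreal (?\<phi> (c * t)) * indicator {0..a} (c * t)) =
          ennreal (1 / sqrt pi) * (ennreal (exp (- t\<^sup>2)) * indicator {0..w} t)"
        using c by (simp add: ennreal_mult[symmetric] mult.assoc[symmetric])
    qed
    also have "\<dots> = ennreal (1 / sqrt pi) * ennreal (erf w * sqrt pi / 2)"
      by (subst nn_integral_cmult) (auto simp: erf_nn[OF w])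
    also have "\<dots> = ennreal (erf w / 2)"
      using erf_nonneg[OF w] by (simp add: ennreal_mult[symmetric])
    finally show ?thesis .
  qed
  have A1: "(\<integral>\<^sup>+x. ennreal (?\<phi> x) * indicator {-a..0} x \<partial>lborel) =
      (\<integral>\<^sup>+x. ennreal (?\<phi> x) * indicator {0..a} x \<partial>lborel)"
  proof -
    have "(\<integral>\<^sup>+x. ennreal (?\<phi> x) * indicator {-a..0} x \<partial>lborel) =
        ennreal \<bar>-1\<bar> * (\<integral>\<^sup>+t. ennreal (?\<phi> (0 + -1 * t)) * indicator {-a..0} (0 + -1 * t) \<partial>lborel)"
      by (intro nn_integral_real_affine) auto
    also have "\<dots> = (\<integral>\<^sup>+x. ennreal (?\<phi> x) * indicator {0..a} x \<partial>lborel)"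
      by (auto intro!: nn_integral_cong simp: normal_density_even split: split_indicator)
    finally show ?thesis .
  qed
  have "emeasure (density lborel ?\<phi>) {-a..a} = (\<integral>\<^sup>+x. ennreal (?\<phi> x) * indicator {-a..a} x \<partial>lborel)"
    by (simp add: emeasure_density)
  also have "\<dots> \<le> (\<integral>\<^sup>+x. ennreal (?\<phi> x) * indicator {-a..0} x + ennreal (?\<phi> x) * indicator {0..a} x \<partial>lborel)"
    by (intro nn_integral_mono) (auto split: split_indicator)
  also have "\<dots> = (\<integral>\<^sup>+x. ennreal (?\<phi> x) * indicator {-a..0} x \<partial>lborel) + (\<integral>\<^sup>+x. ennreal (?\<phi> x) * indicator {0..a} x \<partial>lborel)"
    by (rule nn_integral_add) auto
  also have "\<dots> = ennreal (erf w)"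
    unfolding A1 A2 using erf_nonneg[OF w] by (simp add: ennreal_plus[symmetric])
  finally show ?thesis unfolding w_def c_def .
qed

lemma bathtub:
  fixes \<sigma> a :: real assumes s: "0 < \<sigma>" and a: "0 \<le> a" and A: "A \<in> sets borel"
  shows "emeasure (density lborel (normal_density 0 \<sigma>)) A + ennreal (normal_density 0 \<sigma> a * (2 * a)) \<le>
    emeasure (density lborel (normal_density 0 \<sigma>)) {-a..a} + ennreal (normal_density 0 \<sigma> a) * emeasure lborel A"
proof -
  let ?\<phi> = "normal_density 0 \<sigma>"
  have pt: "ennreal (?\<phi> x) * indicator A x + ennreal (?\<phi> a) * indicator {-a..a} x \<le>
      ennreal (?\<phi> x) * indicator {-a..a} x + ennreal (?\<phi> a) * indicator A x" for x
  proof (cases "\<bar>x\<bar> \<le> a")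
    case True
    then have "?\<phi> a \<le> ?\<phi> x" using a by (intro normal_density_mono) auto
    then show ?thesis using True by (auto split: split_indicator simp: ennreal_leI)
  next
    case False
    then have "?\<phi> x \<le> ?\<phi> a" using a by (intro normal_density_mono) auto
    then show ?thesis using False by (auto split: split_indicator simp: ennreal_leI)
  qed
  have "emeasure (density lborel ?\<phi>) A + ennreal (?\<phi> a * (2 * a)) =
      (\<integral>\<^sup>+x. ennreal (?\<phi> x) * indicator A x \<partial>lborel) + (\<integral>\<^sup>+x. ennreal (?\<phi> a) * indicator {-a..a} x \<partial>lborel)"
    using A a by (simp add: emeasure_density nn_integral_cmult_indicator ennreal_mult)
  also have "\<dots> = (\<integral>\<^sup>+x. ennreal (?\<phi> x) * indicator A x + ennreal (?\<phi> a) * indicator {-a..a} x \<partial>lborel)"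
    using A by (intro nn_integral_add[symmetric]) auto
  also have "\<dots> \<le> (\<integral>\<^sup>+x. ennreal (?\<phi> x) * indicator {-a..a} x + ennreal (?\<phi> a) * indicator A x \<partial>lborel)"
    by (intro nn_integral_mono pt)
  also have "\<dots> = (\<integral>\<^sup>+x. ennreal (?\<phi> x) * indicator {-a..a} x \<partial>lborel) + (\<integral>\<^sup>+x. ennreal (?\<phi> a) * indicator A x \<partial>lborel)"
    using A by (intro nn_integral_add) auto
  also have "\<dots> = emeasure (density lborel ?\<phi>) {-a..a} + ennreal (?\<phi> a) * emeasure lborel A"
    using A by (simp add: emeasure_density nn_integral_cmult_indicator)
  finally show ?thesis .
qed

lemma quant_facts:
  assumes "scalar_quantizer Q L"
  shows "finite (range Q)" "card (range Q) = L" "\<And>k. is_interval (Q -` {k})"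
proof -
  show "finite (range Q)" "card (range Q) = L" using assms unfolding scalar_quantizer_def by auto
  fix k show "is_interval (Q -` {k})"
  proof (cases "k \<in> range Q")
    case True then show ?thesis using assms unfolding scalar_quantizer_def by auto
  next
    case False then have "Q -` {k} = {}" by auto
    then show ?thesis by simp
  qed
qed

lemma quant_meas:
  assumes "scalar_quantizer Q L"
  shows "Q \<in> measurable borel (count_space UNIV)"
proof (rule measurableI)
  fix A :: "'a set" assume "A \<in> sets (count_space UNIV)"
  have "Q -` A \<inter> space borel = (\<Union>k\<in>A \<inter> range Q. Q -` {k})" by auto
  also have "\<dots> \<in> sets borel"
    using quant_facts[OF assms]
    by (intro sets.finite_UN real_interval_borel_measurable) auto
  finally show "Q -` A \<inter> space borel \<in> sets borel" .
qed simp

lemma quant_jump_pos: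
  assumes Q: "scalar_quantizer Q L" and x: "0 \<le> x"
  shows "emeasure lborel {y. Q (x + y) \<noteq> Q y} \<le> ennreal ((real L - 1) * x)"
proof -
  note qf = quant_facts[OF Q]
  define C where "C k = Q -` {k}" for k
  define Kb where "Kb = {k \<in> range Q. bdd_above (C k)}"
  have fin: "finite Kb" unfolding Kb_def using qf by auto
  have "\<not> bdd_above (UNIV :: real set)" by (auto simp: bdd_above_def) (meson gt_ex not_le)
  moreover have "UNIV = (\<Union>k\<in>range Q. C k)" unfolding C_def by auto
  ultimately have "\<exists>k\<in>range Q. \<not> bdd_above (C k)" using qf(1) by (metis bdd_above_UN)
  then have "Kb \<subset> range Q" unfolding Kb_def by auto
  then have cKb: "card Kb < L" using qf psubset_card_mono by metis
  have sub: "{y. Q (x + y) \<noteq> Q y} \<subseteq> (\<Union>k\<in>Kb. {Sup (C k) - x .. Sup (C k)})"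
  proof
    fix y assume "y \<in> {y. Q (x + y) \<noteq> Q y}"
    then have ne: "Q (x + y) \<noteq> Q y" by simp
    define k where "k = Q y"
    have yC: "y \<in> C k" unfolding C_def k_def by simp
    have iv: "is_interval (C k)" unfolding C_def using qf by auto
    have notin: "x + y \<notin> C k" using ne unfolding C_def k_def by simp
    have no_above: "\<not> (\<exists>c\<in>C k. x + y \<le> c)"
    proof
      assume "\<exists>c\<in>C k. x + y \<le> c"
      then obtain c where "c \<in> C k" "x + y \<le> c" by auto
      then have "x + y \<in> C k" using iv yC x unfolding is_interval_1 by (meson le_add_same_cancel2)
      then show False using notin by simp
    qed
    have bdd: "bdd_above (C k)"
      using no_above by (auto simp: bdd_above_def) (meson linorder_le_cases)
    then have kKb: "k \<in> Kb" unfolding Kb_def k_def by simp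
    have "y \<le> Sup (C k)" using bdd yC by (rule cSup_upper[rotated])
    moreover have "Sup (C k) \<le> x + y"
    proof (rule ccontr)
      assume "\<not> Sup (C k) \<le> x + y"
      then have "x + y < Sup (C k)" by simp
      then obtain c where "c \<in> C k" "x + y < c" using less_cSup_iff[of "C k" "x + y"] yC bdd by auto
      then show False using no_above by auto
    qed
    ultimately have "y \<in> {Sup (C k) - x .. Sup (C k)}" by simp
    then show "y \<in> (\<Union>k\<in>Kb. {Sup (C k) - x .. Sup (C k)})" using kKb by blast
  qed
  have "emeasure lborel {y. Q (x + y) \<noteq> Q y} \<le> emeasure lborel (\<Union>k\<in>Kb. {Sup (C k) - x .. Sup (C k)})"
    using fin by (intro emeasure_mono sub sets.finite_UN) auto
  also have "\<dots> \<le> (\<Sum>k\<in>Kb. emeasure lborel {Sup (C k) - x .. Sup (C k)})"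
    using fin by (intro emeasure_subadditive_finite) auto
  also have "\<dots> = (\<Sum>k\<in>Kb. ennreal x)" using x by simp
  also have "\<dots> = ennreal (real (card Kb) * x)" using x by (simp add: ennreal_of_nat_eq_real_of_nat ennreal_mult)
  also have "\<dots> \<le> ennreal ((real L - 1) * x)"
    using cKb x by (intro ennreal_leI mult_right_mono) auto
  finally show ?thesis .
qed

lemma quant_jump:
  assumes Q: "scalar_quantizer Q L"
  shows "emeasure lborel {y. Q (x + y) \<noteq> Q y} \<le> ennreal ((real L - 1) * \<bar>x\<bar>)"
proof (cases "0 \<le> x")
  case True then show ?thesis using quant_jump_pos[OF Q True] by simp
next
  case False
  have Qm: "Q \<in> measurable borel (count_space UNIV)" by (rule quant_meas[OF Q])
  have B: "{t. Q (- x + t) \<noteq> Q t} \<in> sets borel"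
  proof -
    have m1: "(\<lambda>t. Q (- x + t)) \<in> measurable borel (count_space UNIV)"
      by (rule measurable_compose[OF _ Qm]) simp
    have "{t. Q (- x + t) \<noteq> Q t} = space borel - (\<Union>k\<in>range Q. ((\<lambda>t. Q (- x + t)) -` {k} \<inter> space borel) \<inter> (Q -` {k} \<inter> space borel))"
      by auto
    also have "\<dots> \<in> sets borel"
      using quant_facts[OF Q]
      by (intro sets.Diff sets.top sets.finite_UN sets.Int measurable_sets[OF m1] measurable_sets[OF Qm]) auto
    finally show ?thesis .
  qed
  have eq: "{y. Q (x + y) \<noteq> Q y} = (\<lambda>y. x + y) -` {t. Q (- x + t) \<noteq> Q t} \<inter> space lborel"
    by (auto simp: add.assoc[symmetric])
  have "emeasure lborel {y. Q (x + y) \<noteq> Q y} = emeasure (distr lborel borel ((+) x)) {t. Q (- x + t) \<noteq> Q t}"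
    unfolding eq using B by (subst emeasure_distr) auto
  also have "\<dots> = emeasure lborel {t. Q (- x + t) \<noteq> Q t}"
    by (simp add: lborel_distr_plus)
  also have "\<dots> \<le> ennreal ((real L - 1) * (- x))"
    using False by (intro quant_jump_pos[OF Q]) auto
  finally show ?thesis using False by simp
qed

lemma abs_moment:
  fixes Pr :: "real measure"
  assumes Pr: "prob_space Pr" and sPr: "sets Pr = sets borel" and R: "0 \<le> R"
    and mom: "(\<integral>\<^sup>+x. ennreal (x\<^sup>2) \<partial>Pr) \<le> ennreal R"
  shows "(\<integral>\<^sup>+x. ennreal \<bar>x\<bar> \<partial>Pr) \<le> ennreal (sqrt R)"
proof -
  interpret Pr: prob_space Pr by fact
  have mx[measurable]: "(\<lambda>x. x) \<in> borel_measurable Pr"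
    by (simp add: measurable_cong_sets[OF sPr refl])
  show ?thesis
  proof (cases "R = 0")
    case True
    then have "(\<integral>\<^sup>+x. ennreal (x\<^sup>2) \<partial>Pr) = 0" using mom by simp
    then have "AE x in Pr. ennreal (x\<^sup>2) = 0" by (subst (asm) nn_integral_0_iff_AE) auto
    then have "AE x in Pr. ennreal \<bar>x\<bar> = 0" by eventually_elim simp
    then have "(\<integral>\<^sup>+x. ennreal \<bar>x\<bar> \<partial>Pr) = (\<integral>\<^sup>+x. 0 \<partial>Pr)" by (intro nn_integral_cong_AE) auto
    then show ?thesis by simp
  next
    case False
    then have Rp: "R > 0" using R by simp
    define t where "t = sqrt R"
    have tp: "t > 0" unfolding t_def using Rp by simp
    have pt: "ennreal \<bar>x\<bar> \<le> ennreal (1 / (2 * t)) * ennreal (x\<^sup>2) + ennreal (t / 2)" for x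
    proof -
      have "0 \<le> (\<bar>x\<bar> - t)\<^sup>2" by simp
      then have "\<bar>x\<bar> \<le> 1 / (2 * t) * x\<^sup>2 + t / 2"
        using tp by (simp add: power2_eq_square field_simps)
      then have "ennreal \<bar>x\<bar> \<le> ennreal (1 / (2 * t) * x\<^sup>2 + t / 2)" by (rule ennreal_leI)
      also have "\<dots> = ennreal (1 / (2 * t) * x\<^sup>2) + ennreal (t / 2)"
        using tp by (intro ennreal_plus) auto
      also have "ennreal (1 / (2 * t) * x\<^sup>2) = ennreal (1 / (2 * t)) * ennreal (x\<^sup>2)"
        using tp by (intro ennreal_mult) auto
      finally show ?thesis .
    qed
    have "(\<integral>\<^sup>+x. ennreal \<bar>x\<bar> \<partial>Pr) \<le> (\<integral>\<^sup>+x. ennreal (1 / (2 * t)) * ennreal (x\<^sup>2) + ennreal (t / 2) \<partial>Pr)"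
      by (intro nn_integral_mono pt)
    also have "\<dots> = ennreal (1 / (2 * t)) * (\<integral>\<^sup>+x. ennreal (x\<^sup>2) \<partial>Pr) + ennreal (t / 2)"
      by (subst nn_integral_add) (auto simp: nn_integral_cmult Pr.emeasure_space_1)
    also have "\<dots> \<le> ennreal (1 / (2 * t)) * ennreal R + ennreal (t / 2)"
      by (intro add_mono mult_left_mono mom) auto
    also have "ennreal (1 / (2 * t)) * ennreal R = ennreal (1 / (2 * t) * R)"
      using tp R by (intro ennreal_mult[symmetric]) auto
    also have "ennreal (1 / (2 * t) * R) + ennreal (t / 2) = ennreal (1 / (2 * t) * R + t / 2)"
      using tp R by (intro ennreal_plus[symmetric]) auto
    also have "1 / (2 * t) * R + t / 2 = sqrt R"
      using tp Rp unfolding t_def by (simp add: field_simps)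
    finally show ?thesis .
  qed
qed

lemma ebar_bound:
  fixes Pr :: "real measure" and A :: "real \<Rightarrow> real set" and \<sigma> R m :: real
  defines "Ps \<equiv> density lborel (normal_density 0 \<sigma>)"
  assumes Pr: "prob_space Pr" and sPr: "sets Pr = sets borel"
    and s: "0 < \<sigma>" and R: "0 \<le> R" and m: "0 \<le> m"
    and mom: "(\<integral>\<^sup>+x. ennreal (x\<^sup>2) \<partial>Pr) \<le> ennreal R"
    and jump: "\<And>x. emeasure lborel (A x) \<le> ennreal (m * \<bar>x\<bar>)"
    and Ameas: "\<And>x. A x \<in> sets borel"
    and Am: "(\<lambda>x. emeasure Ps (A x)) \<in> borel_measurable Pr"
  shows "(\<integral>\<^sup>+x. emeasure Ps (A x) \<partial>Pr) \<le> emeasure Ps {-(m * sqrt R / 2) .. m * sqrt R / 2}"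
proof -
  interpret Pr: prob_space Pr by fact
  define a where "a = m * sqrt R / 2"
  define \<phi>a where "\<phi>a = normal_density 0 \<sigma> a"
  have a: "0 \<le> a" unfolding a_def using m R by simp
  have \<phi>a: "0 \<le> \<phi>a" unfolding \<phi>a_def by simp
  have mx[measurable]: "(\<lambda>x. x) \<in> borel_measurable Pr"
    by (simp add: measurable_cong_sets[OF sPr refl])
  have pt: "emeasure Ps (A x) + ennreal (\<phi>a * (2 * a)) \<le> emeasure Ps {-a..a} + ennreal (\<phi>a * m) * ennreal \<bar>x\<bar>" for x
  proof -
    have "emeasure Ps (A x) + ennreal (\<phi>a * (2 * a)) \<le> emeasure Ps {-a..a} + ennreal \<phi>a * emeasure lborel (A x)"
      unfolding Ps_def \<phi>a_def by (rule bathtub[OF s a Ameas])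
    also have "\<dots> \<le> emeasure Ps {-a..a} + ennreal \<phi>a * ennreal (m * \<bar>x\<bar>)"
      by (intro add_mono mult_left_mono jump) auto
    also have "\<dots> = emeasure Ps {-a..a} + ennreal (\<phi>a * m) * ennreal \<bar>x\<bar>"
      using \<phi>a m by (simp add: ennreal_mult mult.assoc)
    finally show ?thesis .
  qed
  have "(\<integral>\<^sup>+x. emeasure Ps (A x) \<partial>Pr) + ennreal (\<phi>a * (2 * a)) = (\<integral>\<^sup>+x. emeasure Ps (A x) + ennreal (\<phi>a * (2 * a)) \<partial>Pr)"
    using Am by (subst nn_integral_add) (auto simp: Pr.emeasure_space_1)
  also have "\<dots> \<le> (\<integral>\<^sup>+x. emeasure Ps {-a..a} + ennreal (\<phi>a * m) * ennreal \<bar>x\<bar> \<partial>Pr)"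
    by (intro nn_integral_mono pt)
  also have "\<dots> = emeasure Ps {-a..a} + ennreal (\<phi>a * m) * (\<integral>\<^sup>+x. ennreal \<bar>x\<bar> \<partial>Pr)"
    by (subst nn_integral_add) (auto simp: nn_integral_cmult Pr.emeasure_space_1)
  also have "\<dots> \<le> emeasure Ps {-a..a} + ennreal (\<phi>a * m) * ennreal (sqrt R)"
    by (intro add_mono mult_left_mono abs_moment[OF Pr sPr R mom]) auto
  also have "\<dots> = emeasure Ps {-a..a} + ennreal (\<phi>a * (2 * a))"
    using \<phi>a m R unfolding a_def by (simp add: ennreal_mult[symmetric] mult.assoc)
  finally have "(\<integral>\<^sup>+x. emeasure Ps (A x) \<partial>Pr) + ennreal (\<phi>a * (2 * a)) \<le> emeasure Ps {-a..a} + ennreal (\<phi>a * (2 * a))" .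
  then have "ennreal (\<phi>a * (2 * a)) + (\<integral>\<^sup>+x. emeasure Ps (A x) \<partial>Pr) \<le> ennreal (\<phi>a * (2 * a)) + emeasure Ps {-a..a}"
    by (simp add: add.commute)
  then show ?thesis unfolding a_def[symmetric] by (simp add: ennreal_add_left_cancel_le)
qed

lemma f_bar_ge_erf:
  fixes s :: real assumes L: "1 \<le> L" and s: "0 \<le> s"
  shows "erf ((real L - 1) * sqrt s / sqrt 2) \<le> f_bar L s"
proof -
  define c where "c = (real L - 1) * sqrt s"
  define u where "u = c / sqrt 2"
  have c0: "0 \<le> c" unfolding c_def using L s by simp
  have cu: "c = sqrt 2 * u" unfolding u_def by simp
  have c2: "(real L - 1)\<^sup>2 * s = c\<^sup>2" unfolding c_def using s by (simp add: power_mult_distrib)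
  have "f_bar L s = erf u + sqrt (2 / pi) * c * exp (- (c\<^sup>2 / 2)) - c\<^sup>2 * erfc u"
    unfolding f_bar_def c2 by (simp add: c_def u_def mult.assoc)
  moreover have "c\<^sup>2 * erfc u \<le> sqrt (2 / pi) * c * exp (- (c\<^sup>2 / 2))"
  proof (cases "c = 0")
    case True then show ?thesis by simp
  next
    case False
    then have up: "u > 0" using c0 unfolding u_def by simp
    have m: "u * sqrt pi * (1 - erf u) \<le> exp (- u\<^sup>2)" by (rule mills[OF up])
    have e: "c\<^sup>2 / 2 = u\<^sup>2" unfolding cu by (simp add: power_mult_distrib)
    have "c\<^sup>2 * erfc u = (2 * u / sqrt pi) * (u * sqrt pi * (1 - erf u))"
      unfolding erfc_def cu by (simp add: power_mult_distrib power2_eq_square field_simps)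
    also have "\<dots> \<le> (2 * u / sqrt pi) * exp (- u\<^sup>2)"
      using up by (intro mult_left_mono m) auto
    also have "\<dots> = sqrt (2 / pi) * c * exp (- (c\<^sup>2 / 2))"
      unfolding e unfolding cu by (simp add: real_sqrt_divide field_simps)
    finally show ?thesis .
  qed
  ultimately show ?thesis unfolding u_def c_def by simp
qed

lemma final_combine:
  fixes C e f :: real and L :: nat
  assumes L: "2 \<le> L" and e0: "0 \<le> e" and ef: "e \<le> f"
    and bnd: "\<And>g. 0 < g \<Longrightarrow> g \<le> 1/2 \<Longrightarrow> C \<le> - (1 - e) * log 2 (1 - g) - e * log 2 (g / (real L - 1))"
    and logL: "C \<le> log 2 (real L)"
  shows "C \<le> min (log 2 (real L)) (Hb_bar f + f * log 2 (real L - 1))"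
proof -
  have L1: "real L - 1 \<ge> 1" using L by simp
  have lL: "0 \<le> log 2 (real L - 1)" using L1 by simp
  have "C \<le> Hb_bar f + f * log 2 (real L - 1)"
  proof (cases "0 < f")
    case True
    define g where "g = min f (1/2)"
    have g0: "0 < g" and g1: "g \<le> 1/2" unfolding g_def using True by auto
    have Hg: "Hb_bar f = - g * log 2 g - (1 - g) * log 2 (1 - g)"
      unfolding Hb_bar_def Hb_def g_def ..
    define lg where "lg = log 2 g"
    define lg1 where "lg1 = log 2 (1 - g)"
    define lL where "lL = log 2 (real L - 1)"
    have ldiv: "log 2 (g / (real L - 1)) = lg - lL"
      unfolding lg_def lL_def using g0 L1 by (simp add: log_divide)
    have "C \<le> - (1 - e) * lg1 - e * (lg - lL)"
      using bnd[OF g0 g1] ldiv unfolding lg1_def by simp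
    moreover have "(e - g) * (lg1 - lg) \<le> 0"
    proof (cases "g = f")
      case True
      have "lg \<le> lg1" unfolding lg_def lg1_def using g0 g1 by simp
      then show ?thesis using True ef by (intro mult_nonpos_nonneg) auto
    next
      case False
      then have "g = 1/2" unfolding g_def by auto
      then have "1 - g = g" by simp
      then show ?thesis unfolding lg_def lg1_def by (simp only:) simp
    qed
    moreover have "(e - f) * lL \<le> 0" using ef lL unfolding lL_def by (intro mult_nonpos_nonneg) auto
    ultimately have "C \<le> - g * lg - (1 - g) * lg1 + f * lL"
      by (simp add: algebra_simps)
    then show ?thesis unfolding Hg lg_def lg1_def lL_def by simp
  next
    case False
    then have f0: "f = 0" and e00: "e = 0" using e0 ef by auto
    have "C \<le> 0"
    proof (rule ccontr)
      assume "\<not> C \<le> 0"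
      then have Cp: "C > 0" by simp
      define g where "g = min (1/2) (C * ln 2 / 4)"
      have g0: "0 < g" and g1: "g \<le> 1/2" and g2: "g \<le> C * ln 2 / 4" unfolding g_def using Cp by auto
      have "C \<le> - log 2 (1 - g)" using bnd[OF g0 g1] e00 by simp
      also have "- log 2 (1 - g) = ln (1 / (1 - g)) / ln 2"
        using g1 by (simp add: log_def ln_div)
      also have "ln (1 / (1 - g)) \<le> 1 / (1 - g) - 1" using g1 by (intro ln_le_minus_one) auto
      then have "ln (1 / (1 - g)) / ln 2 \<le> (1 / (1 - g) - 1) / ln 2" by (simp add: divide_right_mono)
      also have "1 / (1 - g) - 1 \<le> 2 * g"
        using g0 g1 by (simp add: field_simps)
      then have "(1 / (1 - g) - 1) / ln 2 \<le> 2 * g / ln 2" by (simp add: divide_right_mono)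
      also have "2 * g / ln 2 \<le> C / 2" using g2 by (simp add: field_simps)
      finally show False using Cp by simp
    qed
    then show ?thesis using f0 by (simp add: Hb_bar_def Hb_def)
  qed
  then show ?thesis using logL by simp
qed

lemma main_bound:
  fixes M :: "'a measure" and r s :: "'a \<Rightarrow> real" and Q :: "real \<Rightarrow> 'q" and L :: nat and \<sigma> Rc :: real
  assumes P: "prob_space M"
    and r[measurable]: "r \<in> borel_measurable M" and s[measurable]: "s \<in> borel_measurable M"
    and ind: "prob_space.indep_var M borel r borel s"
    and Ps: "distr M borel s = density lborel (normal_density 0 \<sigma>)"
    and \<sigma>: "0 < \<sigma>" and Rc: "0 \<le> Rc"
    and mom: "(\<integral>\<^sup>+\<omega>. ennreal ((r \<omega>)\<^sup>2) \<partial>M) \<le> ennreal Rc"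
    and L: "2 \<le> L" and Q: "scalar_quantizer Q L"
  shows "prob_space.conditional_mutual_information M 2 (count_space UNIV) borel borel
           (\<lambda>\<omega>. Q (r \<omega> + s \<omega>)) r s \<le> iota_bar L (Rc / \<sigma>\<^sup>2)"
proof -
  interpret prob_space M by fact
  note qf = quant_facts[OF Q]
  have Qm[measurable]: "Q \<in> measurable borel (count_space UNIV)" by (rule quant_meas[OF Q])
  define K where "K = range Q"
  have K: "finite K" "card K = L" using qf unfolding K_def by auto
  have Kne: "K \<noteq> {}" unfolding K_def by simp
  have QK: "Q x \<in> K" for x unfolding K_def by simp
  define Pr where "Pr = distr M borel r"
  define Pss where "Pss = distr M borel s"
  interpret Pr: prob_space Pr unfolding Pr_def by (rule prob_space_distr) simp
  interpret Ps: prob_space Pss unfolding Pss_def by (rule prob_space_distr) simp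
  interpret PP: pair_prob_space Pr Pss ..
  have sPr: "sets Pr = sets borel" "space Pr = UNIV" unfolding Pr_def by auto
  have sPs: "sets Pss = sets borel" "space Pss = UNIV" unfolding Pss_def by auto
  have sPP: "sets (Pr \<Otimes>\<^sub>M Pss) = sets (borel \<Otimes>\<^sub>M borel)"
    by (intro sets_pair_measure_cong sPr sPs)
  have PssD: "Pss = density lborel (normal_density 0 \<sigma>)" using Ps unfolding Pss_def .
  have joint: "distr M (borel \<Otimes>\<^sub>M borel) (\<lambda>\<omega>. (r \<omega>, s \<omega>)) = Pr \<Otimes>\<^sub>M Pss"
    using ind unfolding indep_var_distribution_eq Pr_def Pss_def by simp
  define q where "q \<omega> = Q (r \<omega> + s \<omega>)" for \<omega>
  have qm[measurable]: "q \<in> measurable M (count_space UNIV)" unfolding q_def by measurable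
  define h where "h k y = measure Pr {x. Q (x + y) = k}" for k y
  have hm[measurable]: "h k \<in> borel_measurable borel" for k
  proof -
    have S: "{v :: real \<times> real. Q (snd v + fst v) = k} \<in> sets (borel \<Otimes>\<^sub>M Pr)"
    proof -
      have "Measurable.pred (borel \<Otimes>\<^sub>M borel) (\<lambda>v :: real \<times> real. Q (snd v + fst v) = k)" by measurable
      then have "{v :: real \<times> real. Q (snd v + fst v) = k} \<in> sets (borel \<Otimes>\<^sub>M borel)"
        by (simp add: pred_def space_pair_measure)
      then show ?thesis by (simp add: sets_pair_measure_cong[OF refl sPr(1)])
    qed
    have "(\<lambda>y. emeasure Pr (Pair y -` {v. Q (snd v + fst v) = k})) \<in> borel_measurable borel"
      by (rule Pr.measurable_emeasure_Pair[OF S])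
    then have "(\<lambda>y. enn2real (emeasure Pr (Pair y -` {v. Q (snd v + fst v) = k}))) \<in> borel_measurable borel"
      by measurable
    moreover have "Pair y -` {v. Q (snd v + fst v) = k} = {x. Q (x + y) = k}" for y by auto
    ultimately show ?thesis unfolding h_def measure_def by simp
  qed
  have h0: "0 \<le> h k y" for k y unfolding h_def by simp
  have h1: "h k y \<le> 1" for k y unfolding h_def by simp
  have hsum: "(\<Sum>k\<in>K. h k y) = 1" for y
  proof -
    have "(\<Sum>k\<in>K. h k y) = measure Pr (\<Union>k\<in>K. {x. Q (x + y) = k})"
      unfolding h_def using K
      by (intro Pr.finite_measure_finite_Union[symmetric]) (auto simp: disjoint_family_on_def sPr)
    also have "(\<Union>k\<in>K. {x. Q (x + y) = k}) = space Pr" using QK by (auto simp: sPr)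
    finally show ?thesis by (simp add: Pr.prob_space)
  qed
  define H1 where "H1 k v = (if Q (fst v + snd v) = k then 1 else 0 :: real)" for k v
  have MI1: "mutual_information 2 (count_space UNIV) (borel \<Otimes>\<^sub>M borel) q (\<lambda>\<omega>. (r \<omega>, s \<omega>)) =
      (\<Sum>k\<in>K. \<integral>v. H1 k v * log 2 (H1 k v) \<partial>distr M (borel \<Otimes>\<^sub>M borel) (\<lambda>\<omega>. (r \<omega>, s \<omega>))) -
      (\<Sum>k\<in>K. prob {\<omega>\<in>space M. q \<omega> = k} * log 2 (prob {\<omega>\<in>space M. q \<omega> = k}))"
  proof (rule MI_discrete)
    show "q \<omega> \<in> K" for \<omega> unfolding q_def by (rule QK)
    show "H1 k \<in> borel_measurable (borel \<Otimes>\<^sub>M borel)" for k unfolding H1_def by measurable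
    show "0 \<le> H1 k v" "H1 k v \<le> 1" for k v unfolding H1_def by auto
    fix C :: "('q \<times> (real \<times> real)) set" assume C[measurable]: "C \<in> sets (count_space UNIV \<Otimes>\<^sub>M (borel \<Otimes>\<^sub>M borel))"
    let ?D = "distr M (borel \<Otimes>\<^sub>M borel) (\<lambda>\<omega>. (r \<omega>, s \<omega>))"
    have "(\<Sum>k\<in>K. \<integral>\<^sup>+v. H1 k v * indicator C (k, v) \<partial>?D) = (\<integral>\<^sup>+v. (\<Sum>k\<in>K. ennreal (H1 k v * indicator C (k, v))) \<partial>?D)"
      by (rule nn_integral_sum[symmetric]) (auto simp: H1_def)
    also have "\<dots> = (\<integral>\<^sup>+v. indicator C (Q (fst v + snd v), v) \<partial>?D)"
    proof (intro nn_integral_cong)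
      fix v :: "real \<times> real"
      have "(\<Sum>k\<in>K. ennreal (H1 k v * indicator C (k, v))) = (\<Sum>k\<in>K. if k = Q (fst v + snd v) then indicator C (Q (fst v + snd v), v) else 0)"
        by (intro sum.cong) (auto simp: H1_def indicator_def)
      also have "\<dots> = indicator C (Q (fst v + snd v), v)" using K QK by (simp add: indicator_def)
      finally show "(\<Sum>k\<in>K. ennreal (H1 k v * indicator C (k, v))) = indicator C (Q (fst v + snd v), v)" .
    qed
    also have "\<dots> = (\<integral>\<^sup>+\<omega>. indicator C (q \<omega>, (r \<omega>, s \<omega>)) \<partial>M)"
      unfolding q_def by (subst nn_integral_distr) auto
    also have "\<dots> = (\<integral>\<^sup>+\<omega>. indicator ((\<lambda>\<omega>. (q \<omega>, (r \<omega>, s \<omega>))) -` C \<inter> space M) \<omega> \<partial>M)"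
      by (intro nn_integral_cong) (auto split: split_indicator)
    also have "\<dots> = emeasure M ((\<lambda>\<omega>. (q \<omega>, (r \<omega>, s \<omega>))) -` C \<inter> space M)"
      by (rule nn_integral_indicator) measurable
    finally show "emeasure M ((\<lambda>\<omega>. (q \<omega>, (r \<omega>, s \<omega>))) -` C \<inter> space M) = (\<Sum>k\<in>K. \<integral>\<^sup>+v. H1 k v * indicator C (k, v) \<partial>?D)"
      by simp
  qed (use K in auto)
  have MI1': "mutual_information 2 (count_space UNIV) (borel \<Otimes>\<^sub>M borel) q (\<lambda>\<omega>. (r \<omega>, s \<omega>)) =
      - (\<Sum>k\<in>K. prob {\<omega>\<in>space M. q \<omega> = k} * log 2 (prob {\<omega>\<in>space M. q \<omega> = k}))"
  proof -
    have z: "(\<lambda>v. H1 k v * log 2 (H1 k v)) = (\<lambda>v. 0)" for k unfolding H1_def by (rule ext) simp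
    show ?thesis unfolding MI1 z by simp
  qed
  have MI2: "mutual_information 2 (count_space UNIV) borel q s =
      (\<Sum>k\<in>K. \<integral>y. h k y * log 2 (h k y) \<partial>Pss) -
      (\<Sum>k\<in>K. prob {\<omega>\<in>space M. q \<omega> = k} * log 2 (prob {\<omega>\<in>space M. q \<omega> = k}))"
    unfolding Pss_def
  proof (rule MI_discrete)
    show "q \<omega> \<in> K" for \<omega> unfolding q_def by (rule QK)
    fix C :: "('q \<times> real) set" assume C[measurable]: "C \<in> sets (count_space UNIV \<Otimes>\<^sub>M borel)"
    have "emeasure M ((\<lambda>\<omega>. (q \<omega>, s \<omega>)) -` C \<inter> space M) = (\<integral>\<^sup>+\<omega>. indicator ((\<lambda>\<omega>. (q \<omega>, s \<omega>)) -` C \<inter> space M) \<omega> \<partial>M)"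
      by (rule nn_integral_indicator[symmetric]) measurable
    also have "\<dots> = (\<integral>\<^sup>+\<omega>. indicator C (Q (fst (r \<omega>, s \<omega>) + snd (r \<omega>, s \<omega>)), snd (r \<omega>, s \<omega>)) \<partial>M)"
      by (intro nn_integral_cong) (auto split: split_indicator simp: q_def)
    also have "\<dots> = (\<integral>\<^sup>+v. indicator C (Q (fst v + snd v), snd v) \<partial>distr M (borel \<Otimes>\<^sub>M borel) (\<lambda>\<omega>. (r \<omega>, s \<omega>)))"
      by (subst nn_integral_distr) auto
    also have "\<dots> = (\<integral>\<^sup>+v. indicator C (Q (fst v + snd v), snd v) \<partial>(Pr \<Otimes>\<^sub>M Pss))"
      unfolding joint ..
    also have "\<dots> = (\<integral>\<^sup>+y. (\<integral>\<^sup>+x. indicator C (Q (x + y), y) \<partial>Pr) \<partial>Pss)"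
    proof (rule PP.nn_integral_snd[symmetric, where f="\<lambda>v. indicator C (Q (fst v + snd v), snd v)", simplified])
      have "(\<lambda>v. indicator C (Q (fst v + snd v), snd v) :: ennreal) \<in> borel_measurable (borel \<Otimes>\<^sub>M borel)" by measurable
      then show "(\<lambda>v. indicator C (Q (fst v + snd v), snd v) :: ennreal) \<in> borel_measurable (Pr \<Otimes>\<^sub>M Pss)"
        by (simp add: measurable_cong_sets[OF sPP refl])
    qed
    also have "\<dots> = (\<integral>\<^sup>+y. (\<Sum>k\<in>K. ennreal (h k y * indicator C (k, y))) \<partial>Pss)"
    proof (intro nn_integral_cong)
      fix y :: real
      have "(\<integral>\<^sup>+x. indicator C (Q (x + y), y) \<partial>Pr) = (\<integral>\<^sup>+x. (\<Sum>k\<in>K. indicator C (k, y) * indicator {x. Q (x + y) = k} x) \<partial>Pr)"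
      proof (intro nn_integral_cong)
        fix x :: real
        have "(\<Sum>k\<in>K. indicator C (k, y) * indicator {x. Q (x + y) = k} x :: ennreal) = (\<Sum>k\<in>K. if k = Q (x + y) then indicator C (Q (x + y), y) else 0)"
          by (intro sum.cong) (auto split: split_indicator)
        also have "\<dots> = indicator C (Q (x + y), y)" using K QK by simp
        finally show "indicator C (Q (x + y), y) = (\<Sum>k\<in>K. indicator C (k, y) * indicator {x. Q (x + y) = k} x :: ennreal)" by simp
      qed
      also have "\<dots> = (\<Sum>k\<in>K. (\<integral>\<^sup>+x. indicator C (k, y) * indicator {x. Q (x + y) = k} x \<partial>Pr))"
      proof (rule nn_integral_sum)
        fix k
        have "{x. Q (x + y) = k} \<in> sets borel" by measurable
        then show "(\<lambda>x. indicator C (k, y) * indicator {x. Q (x + y) = k} x :: ennreal) \<in> borel_measurable Pr"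
          unfolding measurable_cong_sets[OF sPr(1) refl] by measurable
      qed
      also have "\<dots> = (\<Sum>k\<in>K. ennreal (h k y * indicator C (k, y)))"
      proof (intro sum.cong refl)
        fix k assume "k \<in> K"
        have "{x. Q (x + y) = k} \<in> sets Pr" unfolding sPr by measurable
        then have "(\<integral>\<^sup>+x. indicator C (k, y) * indicator {x. Q (x + y) = k} x \<partial>Pr) = indicator C (k, y) * emeasure Pr {x. Q (x + y) = k}"
          by (rule nn_integral_cmult_indicator)
        also have "\<dots> = ennreal (h k y * indicator C (k, y))"
          unfolding h_def Pr.emeasure_eq_measure by (simp add: ennreal_mult' mult.commute split: split_indicator)
        finally show "(\<integral>\<^sup>+x. indicator C (k, y) * indicator {x. Q (x + y) = k} x \<partial>Pr) = ennreal (h k y * indicator C (k, y))" .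
      qed
      finally show "(\<integral>\<^sup>+x. indicator C (Q (x + y), y) \<partial>Pr) = (\<Sum>k\<in>K. ennreal (h k y * indicator C (k, y)))" .
    qed
    also have "\<dots> = (\<Sum>k\<in>K. \<integral>\<^sup>+y. h k y * indicator C (k, y) \<partial>Pss)"
    proof (rule nn_integral_sum)
      fix k
      show "(\<lambda>y. ennreal (h k y * indicator C (k, y))) \<in> borel_measurable Pss"
        unfolding measurable_cong_sets[OF sPs(1) refl] by measurable
    qed
    finally show "emeasure M ((\<lambda>\<omega>. (q \<omega>, s \<omega>)) -` C \<inter> space M) = (\<Sum>k\<in>K. \<integral>\<^sup>+y. h k y * indicator C (k, y) \<partial>distr M borel s)"
      unfolding Pss_def .
  qed (use K h0 h1 in auto)
  have hlogh_int: "integrable Pss (\<lambda>y. h k y * log 2 (h k y))" for k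
  proof (rule Ps.integrable_const_bound[where B="(1 + 1\<^sup>2) / ln 2"])
    show "AE y in Pss. norm (h k y * log 2 (h k y)) \<le> (1 + 1\<^sup>2) / ln 2"
      using xlogx_bound[of 2 "h k _" 1] h0 h1 by (intro AE_I2) simp
    show "(\<lambda>y. h k y * log 2 (h k y)) \<in> borel_measurable Pss" unfolding measurable_cong_sets[OF sPs(1) refl] by measurable
  qed
  have Ent_int: "integrable Pss (\<lambda>y. Ent K (\<lambda>k. h k y))"
    unfolding Ent_def minus_mult_left[symmetric] by (intro Bochner_Integration.integrable_sum integrable_minus hlogh_int)
  have CMI: "conditional_mutual_information 2 (count_space UNIV) borel borel q r s = (\<integral>y. Ent K (\<lambda>k. h k y) \<partial>Pss)"
  proof -
    have "(\<integral>y. Ent K (\<lambda>k. h k y) \<partial>Pss) = (\<Sum>k\<in>K. \<integral>y. - (h k y * log 2 (h k y)) \<partial>Pss)"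
      unfolding Ent_def minus_mult_left[symmetric] by (intro Bochner_Integration.integral_sum integrable_minus hlogh_int)
    also have "\<dots> = - (\<Sum>k\<in>K. \<integral>y. h k y * log 2 (h k y) \<partial>Pss)"
      by (simp add: sum_negf)
    finally show ?thesis unfolding conditional_mutual_information_def MI1' MI2 by simp
  qed
  have logbound: "(\<integral>y. Ent K (\<lambda>k. h k y) \<partial>Pss) \<le> log 2 (real L)"
  proof -
    have "(\<integral>y. Ent K (\<lambda>k. h k y) \<partial>Pss) \<le> (\<integral>y. log 2 (real L) \<partial>Pss)"
    proof (intro Bochner_Integration.integral_mono Ent_int)
      fix y show "Ent K (\<lambda>k. h k y) \<le> log 2 (real L)"
        using Ent_le_log_card[OF K(1) Kne, of "\<lambda>k. h k y"] h0 hsum K(2) by simp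
    qed simp
    then show ?thesis using Ps.prob_space by simp
  qed
  define hQ where "hQ y = (\<Sum>k\<in>K. if Q y = k then h k y else 0)" for y
  have hQ_eq: "hQ y = h (Q y) y" for y using K QK[of y] unfolding hQ_def by (simp add: sum.delta')
  have hQm[measurable]: "hQ \<in> borel_measurable borel" unfolding hQ_def by measurable
  define e where "e y = 1 - hQ y" for y
  have e01: "0 \<le> e y" "e y \<le> 1" for y unfolding e_def hQ_eq using h0 h1 by auto
  have e_int: "integrable Pss e"
  proof (rule Ps.integrable_const_bound[where B=1])
    show "AE y in Pss. norm (e y) \<le> 1" using e01 by (intro AE_I2) simp
    show "e \<in> borel_measurable Pss" unfolding measurable_cong_sets[OF sPs(1) refl] e_def by measurable
  qed
  define eb where "eb = (\<integral>y. e y \<partial>Pss)"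
  have eb0: "0 \<le> eb" unfolding eb_def using e01 by (intro Bochner_Integration.integral_nonneg) auto
  have bnd: "(\<integral>y. Ent K (\<lambda>k. h k y) \<partial>Pss) \<le> - (1 - eb) * log 2 (1 - g) - eb * log 2 (g / (real L - 1))"
    if g: "0 < g" "g \<le> 1/2" for g
  proof -
    define A where "A = log 2 (1 - g)"
    define B where "B = log 2 (g / (real L - 1))"
    have "(\<integral>y. Ent K (\<lambda>k. h k y) \<partial>Pss) \<le> (\<integral>y. (A - B) * e y - A \<partial>Pss)"
    proof (intro Bochner_Integration.integral_mono Ent_int)
      show "integrable Pss (\<lambda>y. (A - B) * e y - A)"
        using e_int by (intro Bochner_Integration.integrable_diff integrable_mult_right) auto
      fix y
      have "Ent K (\<lambda>k. h k y) \<le> - (h (Q y) y) * log 2 (1 - g) - (1 - h (Q y) y) * log 2 (g / (real L - 1))"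
        by (rule Ent_fano[OF K(1) QK K(2) L]) (use h0 hsum g in auto)
      also have "\<dots> = (A - B) * e y - A" unfolding A_def B_def e_def hQ_eq by (simp add: algebra_simps)
      finally show "Ent K (\<lambda>k. h k y) \<le> (A - B) * e y - A" .
    qed
    also have "\<dots> = (A - B) * eb - A"
      using e_int Ps.prob_space unfolding eb_def by (subst Bochner_Integration.integral_diff) auto
    also have "\<dots> = - (1 - eb) * log 2 (1 - g) - eb * log 2 (g / (real L - 1))"
      unfolding A_def B_def by (simp add: algebra_simps)
    finally show ?thesis .
  qed
  define m where "m = real L - 1"
  have m0: "0 \<le> m" unfolding m_def using L by simp
  define S where "S = space (borel \<Otimes>\<^sub>M borel) - (\<Union>k\<in>K. {v::real\<times>real. Q (fst v + snd v) = k} \<inter> {v. Q (snd v) = k})"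
  have S_eq: "v \<in> S \<longleftrightarrow> Q (fst v + snd v) \<noteq> Q (snd v)" for v using QK by (auto simp: S_def space_pair_measure)
  have Sm: "S \<in> sets (borel \<Otimes>\<^sub>M borel)"
  proof -
    have "{v::real\<times>real. Q (fst v + snd v) = k} \<in> sets (borel \<Otimes>\<^sub>M borel)" for k
    proof -
      have "Measurable.pred (borel \<Otimes>\<^sub>M borel) (\<lambda>v :: real \<times> real. Q (fst v + snd v) = k)" by measurable
      then show ?thesis by (simp add: pred_def space_pair_measure)
    qed
    moreover have "{v::real\<times>real. Q (snd v) = k} \<in> sets (borel \<Otimes>\<^sub>M borel)" for k
    proof -
      have "Measurable.pred (borel \<Otimes>\<^sub>M borel) (\<lambda>v :: real \<times> real. Q (snd v) = k)" by measurable
      then show ?thesis by (simp add: pred_def space_pair_measure)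
    qed
    ultimately show ?thesis unfolding S_def using K(1)
      by (intro sets.Diff sets.top sets.finite_UN sets.Int) auto
  qed
  have SPP: "S \<in> sets (Pr \<Otimes>\<^sub>M Pss)" using Sm sPP by simp
  have slice1: "(\<lambda>x. (x, y)) -` S = {x. Q (x + y) \<noteq> Q y}" for y using S_eq by auto
  have slice2: "Pair x -` S = {y. Q (x + y) \<noteq> Q y}" for x using S_eq by auto
  have e_meas: "e y = measure Pr {x. Q (x + y) \<noteq> Q y}" for y
  proof -
    have ev: "{x. Q (x + y) = Q y} \<in> sets Pr" unfolding sPr by measurable
    have "e y = 1 - measure Pr {x. Q (x + y) = Q y}" unfolding e_def hQ_eq h_def ..
    also have "\<dots> = measure Pr (space Pr - {x. Q (x + y) = Q y})" by (rule Pr.prob_compl[OF ev, symmetric])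
    also have "space Pr - {x. Q (x + y) = Q y} = {x. Q (x + y) \<noteq> Q y}" by (auto simp: sPr)
    finally show ?thesis .
  qed
  define a where "a = m * sqrt Rc / 2"
  have a0: "0 \<le> a" unfolding a_def using m0 Rc by simp
  define f where "f = f_bar L (Rc / \<sigma>\<^sup>2)"
  define u where "u = (real L - 1) * sqrt (Rc / \<sigma>\<^sup>2) / sqrt 2"
  have u0: "0 \<le> u" unfolding u_def using L Rc by simp
  have au: "a / (\<sigma> * sqrt 2) \<le> u"
  proof -
    have "sqrt (Rc / \<sigma>\<^sup>2) = sqrt Rc / \<sigma>" using \<sigma> by (simp add: real_sqrt_divide)
    then have "a / (\<sigma> * sqrt 2) = u / 2" unfolding a_def u_def m_def by (simp add: field_simps)
    then show ?thesis using u0 by simp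
  qed
  have fu: "erf u \<le> f" unfolding f_def u_def using L Rc by (intro f_bar_ge_erf) auto
  have f0: "0 \<le> f" using fu erf_nonneg[OF u0] by simp
  have momPr: "(\<integral>\<^sup>+x. ennreal (x\<^sup>2) \<partial>Pr) \<le> ennreal Rc"
    using mom unfolding Pr_def by (subst nn_integral_distr) auto
  have Am: "(\<lambda>x. emeasure (density lborel (normal_density 0 \<sigma>)) {y. Q (x + y) \<noteq> Q y}) \<in> borel_measurable Pr"
    using Ps.measurable_emeasure_Pair[OF SPP] unfolding slice2 PssD .
  have Ameas: "{y. Q (x + y) \<noteq> Q y} \<in> sets borel" for x
    using sets_Pair1[OF Sm, of x] unfolding slice2 .
  have "ennreal eb = (\<integral>\<^sup>+y. ennreal (e y) \<partial>Pss)"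
    unfolding eb_def using e_int e01 by (intro nn_integral_eq_integral[symmetric]) auto
  also have "\<dots> = (\<integral>\<^sup>+y. emeasure Pr ((\<lambda>x. (x, y)) -` S) \<partial>Pss)"
    by (intro nn_integral_cong) (simp add: e_meas slice1 Pr.emeasure_eq_measure)
  also have "\<dots> = emeasure (Pr \<Otimes>\<^sub>M Pss) S"
    by (rule PP.emeasure_pair_measure_alt2[symmetric, OF SPP])
  also have "\<dots> = (\<integral>\<^sup>+x. emeasure Pss (Pair x -` S) \<partial>Pr)"
    by (rule Ps.emeasure_pair_measure_alt[OF SPP])
  also have "\<dots> = (\<integral>\<^sup>+x. emeasure (density lborel (normal_density 0 \<sigma>)) {y. Q (x + y) \<noteq> Q y} \<partial>Pr)"
    unfolding slice2 PssD ..
  also have "\<dots> \<le> emeasure (density lborel (normal_density 0 \<sigma>)) {-(m * sqrt Rc / 2) .. m * sqrt Rc / 2}"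
    by (rule ebar_bound[OF Pr.prob_space_axioms sPr(1) \<sigma> Rc m0 momPr _ Ameas Am])
       (use quant_jump[OF Q] in \<open>simp add: m_def\<close>)
  also have "\<dots> \<le> ennreal (erf (a / (\<sigma> * sqrt 2)))"
    unfolding a_def[symmetric] by (rule gauss_interval[OF \<sigma> a0])
  also have "\<dots> \<le> ennreal f"
    using erf_mono[OF _ au] fu \<sigma> a0 by (intro ennreal_leI) simp
  finally have eb_le: "eb \<le> f" using f0 by (simp add: ennreal_le_iff)
  have "conditional_mutual_information 2 (count_space UNIV) borel borel q r s \<le>
      min (log 2 (real L)) (Hb_bar f + f * log 2 (real L - 1))"
    unfolding CMI by (rule final_combine[OF L eb0 eb_le bnd logbound])
  then show ?thesis unfolding q_def iota_bar_def f_def .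
qed

theorem theorem2:
  fixes M :: "'a measure" and r z n :: "'a \<Rightarrow> real"
    and Q :: "real \<Rightarrow> 'q" and L :: nat and Zc N0 Rc :: real
  assumes "prob_space M"
    and "r \<in> borel_measurable M"
    and "prob_space.indep_vars M (\<lambda>_. borel)
           (\<lambda>i::nat. if i = 0 then r else if i = 1 then z else n) {0, 1, 2}"
    and "Zc \<ge> 0" and "N0 > 0"
    and "centered_gaussian M z Zc"
    and "centered_gaussian M n N0"
    and "Rc \<ge> 0"
    and "(\<integral>\<^sup>+ \<omega>. ennreal ((r \<omega>)\<^sup>2) \<partial>M) \<le> ennreal Rc"
    and "L \<ge> 2"
    and "scalar_quantizer Q L"
  shows "prob_space.conditional_mutual_information M 2 (count_space UNIV) borel borel
           (\<lambda>\<omega>. Q (r \<omega> + z \<omega> + n \<omega>)) r (\<lambda>\<omega>. z \<omega> + n \<omega>)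
         \<le> iota_bar L (Rc / (Zc + N0))"
proof -
  interpret prob_space M by fact
  define X where "X = (\<lambda>i::nat. if i = 0 then r else if i = 1 then z else n)"
  have ind3: "indep_vars (\<lambda>_. borel) X {0, 1, 2}" using assms(3) unfolding X_def .
  have zm[measurable]: "z \<in> borel_measurable M" using assms(6) unfolding centered_gaussian_def by simp
  have nm[measurable]: "n \<in> borel_measurable M" using assms(7) unfolding centered_gaussian_def by simp
  have ind_r: "indep_var borel r borel (\<lambda>\<omega>. z \<omega> + n \<omega>)"
  proof -
    have "indep_var borel (X 0) borel (\<lambda>\<omega>. \<Sum>i\<in>{1, 2}. X i \<omega>)"
      using ind3 by (intro indep_vars_sum) auto
    then show ?thesis by (simp add: X_def)
  qed
  have ind_zn: "indep_var borel z borel n"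
  proof -
    have "indep_vars (\<lambda>_. borel) X {1, 2}" by (rule indep_vars_subset[OF ind3]) auto
    then have "indep_var borel (X 1) borel (\<lambda>\<omega>. \<Sum>i\<in>{2}. X i \<omega>)" by (intro indep_vars_sum) auto
    then show ?thesis by (simp add: X_def)
  qed
  have dn: "distr M borel n = density lborel (normal_density 0 (sqrt N0))"
    using assms(7,5) unfolding centered_gaussian_def by simp
  have Ps: "distr M borel (\<lambda>\<omega>. z \<omega> + n \<omega>) = density lborel (normal_density 0 (sqrt (Zc + N0)))"
  proof (cases "Zc = 0")
    case True
    have dz: "distr M borel z = return borel 0" using assms(6) True unfolding centered_gaussian_def by simp
    have "emeasure (distr M borel z) (UNIV - {0}) = 0" unfolding dz by simp
    then have null: "z -` (UNIV - {0}) \<inter> space M \<in> null_sets M"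
      by (subst (asm) emeasure_distr) auto
    have "AE \<omega> in M. z \<omega> = 0"
      by (rule AE_I'[OF null]) auto
    then have "distr M borel (\<lambda>\<omega>. z \<omega> + n \<omega>) = distr M borel n"
      by (intro distr_cong_AE) auto
    then show ?thesis using dn True by simp
  next
    case False
    then have Zp: "0 < Zc" using assms(4) by simp
    have dz: "distr M borel z = density lborel (normal_density 0 (sqrt Zc))"
      using assms(6) False unfolding centered_gaussian_def by simp
    have Dz: "distributed M lborel z (normal_density 0 (sqrt Zc))"
      unfolding distributed_def using dz by (simp add: distr_cong[OF refl sets_lborel])
    have Dn: "distributed M lborel n (normal_density 0 (sqrt N0))"
      unfolding distributed_def using dn by (simp add: distr_cong[OF refl sets_lborel])
    have "distributed M lborel (\<lambda>x. z x + n x) (normal_density (0 + 0) (sqrt ((sqrt Zc)\<^sup>2 + (sqrt N0)\<^sup>2)))"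
      by (rule add_indep_normal[OF ind_zn _ _ Dz Dn]) (use Zp assms(5) in auto)
    then have "distr M lborel (\<lambda>x. z x + n x) = density lborel (normal_density 0 (sqrt (Zc + N0)))"
      unfolding distributed_def using Zp assms(5) by simp
    then show ?thesis by (simp add: distr_cong[OF refl sets_lborel])
  qed
  have \<sigma>: "0 < sqrt (Zc + N0)" using assms(4,5) by simp
  have \<sigma>2: "(sqrt (Zc + N0))\<^sup>2 = Zc + N0" using assms(4,5) by simp
  have "conditional_mutual_information 2 (count_space UNIV) borel borel
           (\<lambda>\<omega>. Q (r \<omega> + (z \<omega> + n \<omega>))) r (\<lambda>\<omega>. z \<omega> + n \<omega>)
         \<le> iota_bar L (Rc / (sqrt (Zc + N0))\<^sup>2)"
    by (rule main_bound[OF assms(1) assms(2) _ ind_r Ps \<sigma> assms(8) assms(9) assms(10) assms(11)]) simp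
  then show ?thesis unfolding \<sigma>2 by (simp add: add.assoc)
qed

end
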